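(* Let $D>0$, $r\in(0,1)$, $\theta_m=Dr^m$, $\mathcal B=\mathcal B(\{\theta_m\})$, $b_1,b_2>0$. There exists $C_4>0$ depending only on $b_1,b_2$ (besides $N,D,r$) with the following property: for every $q\in\mathbb N$ and $R>e^{h_{\mathrm{top}}(\sigma_{\mathbf A})}$ there exists $N_1\in\mathbb N$, depending only on $q$ and $R$, such that for all $n\ge N_1$ and every $g\in V$ satisfying (H), $a_n(\mathscr L_g^q)\le\left(\frac{C_4}{r^2}\right)^q(n-1)^{-2q\ln(1/r)/\ln R}$.
   Context: $\Sigma_{\mathbf A}^+$ is the one-sided Markov shift of an $N\times N$ zero-one aperiodic matrix $\mathbf A$, $\sigma_{\mathbf A}$ the shift, $h_{\mathrm{top}}(\sigma_{\mathbf A})$ its topological entropy. $\mathrm{var}_k(\phi)=\sup\{|\phi(\omega)-\phi(\omega')|:\omega_j=\omega'_j,\ 0\le j\le k-1\}$; $V=\{\phi:\mathrm{var}_k(\phi)^{1/k}\to0\}$. $(\mathscr L_g\phi)(\omega)=\sum_{\sigma_{\mathbf A}\omega'=\omega}e^{g(\omega')}\phi(\omega')$, viewed as an operator on $\mathcal B$. $\mathcal B(\{\theta_m\})=\{\phi\in V:\exists C\ge0,\ \mathrm{var}_k(\phi)\le C\theta_{k+1}^k\ \forall k\ge0\}$ with norm $\|\phi\|_\infty+\inf C$. Condition (H) on $g\in V$: $e^{\max\mathrm{Re}\,g}\le b_1$ and $\mathrm{var}_k(g)\le b_2\theta_k^k$ for all $k\in\mathbb N$. For a bounded operator $T$ on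 a Banach space $E$, $a_n(T)=\inf\{\|T-A\|:A\in\mathfrak L(E),\ \mathrm{rank}\,A<n\}$. *)

theory Defs
  imports Complex_Main
begin

type_synonym seq = "nat \<Rightarrow> nat"
type_synonym cfun = "seq \<Rightarrow> complex"

definition zero_one_matrix :: "nat \<Rightarrow> (nat \<Rightarrow> nat \<Rightarrow> nat) \<Rightarrow> bool" where
  "zero_one_matrix N A \<longleftrightarrow> (\<forall>i<N. \<forall>j<N. A i j \<in> {0, 1})"

fun mpow :: "nat \<Rightarrow> (nat \<Rightarrow> nat \<Rightarrow> nat) \<Rightarrow> nat \<Rightarrow> nat \<Rightarrow> nat \<Rightarrow> nat" where
  "mpow N A 0 i j = (if i = j then 1 else 0)"
| "mpow N A (Suc m) i j = (\<Sum>k<N. mpow N A m i k * A k j)"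

definition aperiodic :: "nat \<Rightarrow> (nat \<Rightarrow> nat \<Rightarrow> nat) \<Rightarrow> bool" where
  "aperiodic N A \<longleftrightarrow> (\<exists>M>0. \<forall>i<N. \<forall>j<N. mpow N A M i j > 0)"

definition Sig :: "nat \<Rightarrow> (nat \<Rightarrow> nat \<Rightarrow> nat) \<Rightarrow> seq set" where
  "Sig N A = {\<omega>. (\<forall>j. \<omega> j < N) \<and> (\<forall>j. A (\<omega> j) (\<omega> (Suc j)) = 1)}"

definition shiftA :: "seq \<Rightarrow> seq" where
  "shiftA \<omega> = (\<lambda>j. \<omega> (Suc j))"

definition words :: "nat \<Rightarrow> (nat \<Rightarrow> nat \<Rightarrow> nat) \<Rightarrow> nat \<Rightarrow> nat list set" where
  "words N A n = {w. length w = n \<and> (\<forall>i<n. w ! i < N) \<and>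
                     (\<forall>i. Suc i < n \<longrightarrow> A (w ! i) (w ! Suc i) = 1)}"

definition htop :: "nat \<Rightarrow> (nat \<Rightarrow> nat \<Rightarrow> nat) \<Rightarrow> real" where
  "htop N A = lim (\<lambda>n. ln (real (card (words N A n))) / real n)"

definition varset :: "nat \<Rightarrow> (nat \<Rightarrow> nat \<Rightarrow> nat) \<Rightarrow> nat \<Rightarrow> cfun \<Rightarrow> real set" where
  "varset N A k \<phi> = {cmod (\<phi> \<omega> - \<phi> \<omega>') | \<omega> \<omega>'.
       \<omega> \<in> Sig N A \<and> \<omega>' \<in> Sig N A \<and> (\<forall>j<k. \<omega> j = \<omega>' j)}"

definition var :: "nat \<Rightarrow> (nat \<Rightarrow> nat \<Rightarrow> nat) \<Rightarrow> nat \<Rightarrow> cfun \<Rightarrow> real" where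
  "var N A k \<phi> = Sup (varset N A k \<phi>)"

definition Vsp :: "nat \<Rightarrow> (nat \<Rightarrow> nat \<Rightarrow> nat) \<Rightarrow> cfun set" where
  "Vsp N A = {\<phi>. (\<forall>k. bdd_above (varset N A k \<phi>)) \<and>
                 (\<lambda>k. var N A k \<phi> powr (1 / real k)) \<longlonglongrightarrow> 0}"

text \<open>The Banach space B({theta_m}); functions are represented as vanishing off Sig.\<close>

definition Bconsts :: "nat \<Rightarrow> (nat \<Rightarrow> nat \<Rightarrow> nat) \<Rightarrow> (nat \<Rightarrow> real) \<Rightarrow> cfun \<Rightarrow> real set" where
  "Bconsts N A \<theta> \<phi> = {C. C \<ge> 0 \<and> (\<forall>k. var N A k \<phi> \<le> C * \<theta> (Suc k) ^ k)}"

definition Bsp :: "nat \<Rightarrow> (nat \<Rightarrow> nat \<Rightarrow> nat) \<Rightarrow> (nat \<Rightarrow> real) \<Rightarrow> cfun set" where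
  "Bsp N A \<theta> = {\<phi>. \<phi> \<in> Vsp N A \<and> (\<forall>\<omega>. \<omega> \<notin> Sig N A \<longrightarrow> \<phi> \<omega> = 0) \<and> Bconsts N A \<theta> \<phi> \<noteq> {}}"

definition supnorm :: "nat \<Rightarrow> (nat \<Rightarrow> nat \<Rightarrow> nat) \<Rightarrow> cfun \<Rightarrow> real" where
  "supnorm N A \<phi> = Sup {cmod (\<phi> \<omega>) | \<omega>. \<omega> \<in> Sig N A}"

definition Bnorm :: "nat \<Rightarrow> (nat \<Rightarrow> nat \<Rightarrow> nat) \<Rightarrow> (nat \<Rightarrow> real) \<Rightarrow> cfun \<Rightarrow> real" where
  "Bnorm N A \<theta> \<phi> = supnorm N A \<phi> + Inf (Bconsts N A \<theta> \<phi>)"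

definition Lop :: "nat \<Rightarrow> (nat \<Rightarrow> nat \<Rightarrow> nat) \<Rightarrow> cfun \<Rightarrow> cfun \<Rightarrow> cfun" where
  "Lop N A g \<phi> \<omega> = (\<Sum>\<omega>'\<in>{\<omega>'. \<omega>' \<in> Sig N A \<and> shiftA \<omega>' = \<omega>}. exp (g \<omega>') * \<phi> \<omega>')"

definition bounded_op :: "nat \<Rightarrow> (nat \<Rightarrow> nat \<Rightarrow> nat) \<Rightarrow> (nat \<Rightarrow> real) \<Rightarrow> (cfun \<Rightarrow> cfun) \<Rightarrow> bool" where
  "bounded_op N A \<theta> T \<longleftrightarrow>
     (\<forall>\<phi>\<in>Bsp N A \<theta>. T \<phi> \<in> Bsp N A \<theta>) \<and>
     (\<forall>\<phi>\<in>Bsp N A \<theta>. \<forall>\<psi>\<in>Bsp N A \<theta>. T (\<lambda>\<omega>. \<phi> \<omega> + \<psi> \<omega>) = (\<lambda>\<omega>. T \<phi> \<omega> + T \<psi> \<omega>)) \<and>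
     (\<forall>c. \<forall>\<phi>\<in>Bsp N A \<theta>. T (\<lambda>\<omega>. c * \<phi> \<omega>) = (\<lambda>\<omega>. c * T \<phi> \<omega>)) \<and>
     (\<exists>K. \<forall>\<phi>\<in>Bsp N A \<theta>. Bnorm N A \<theta> (T \<phi>) \<le> K * Bnorm N A \<theta> \<phi>)"

definition opnorm :: "nat \<Rightarrow> (nat \<Rightarrow> nat \<Rightarrow> nat) \<Rightarrow> (nat \<Rightarrow> real) \<Rightarrow> (cfun \<Rightarrow> cfun) \<Rightarrow> real" where
  "opnorm N A \<theta> T = Sup {Bnorm N A \<theta> (T \<phi>) | \<phi>. \<phi> \<in> Bsp N A \<theta> \<and> Bnorm N A \<theta> \<phi> \<le> 1}"

definition rank_lt :: "nat \<Rightarrow> (nat \<Rightarrow> nat \<Rightarrow> nat) \<Rightarrow> (nat \<Rightarrow> real) \<Rightarrow> (cfun \<Rightarrow> cfun) \<Rightarrow> nat \<Rightarrow> bool" where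
  "rank_lt N A \<theta> T n \<longleftrightarrow>
     (\<exists>m<n. \<exists>f :: nat \<Rightarrow> cfun. \<forall>\<phi>\<in>Bsp N A \<theta>. \<exists>c :: nat \<Rightarrow> complex.
        T \<phi> = (\<lambda>\<omega>. \<Sum>i<m. c i * f i \<omega>))"

definition approx_num :: "nat \<Rightarrow> (nat \<Rightarrow> nat \<Rightarrow> nat) \<Rightarrow> (nat \<Rightarrow> real) \<Rightarrow> nat \<Rightarrow> (cfun \<Rightarrow> cfun) \<Rightarrow> real" where
  "approx_num N A \<theta> n T =
     Inf {opnorm N A \<theta> (\<lambda>\<phi> \<omega>. T \<phi> \<omega> - S \<phi> \<omega>) | S. bounded_op N A \<theta> S \<and> rank_lt N A \<theta> S n}"

definition condH :: "nat \<Rightarrow> (nat \<Rightarrow> nat \<Rightarrow> nat) \<Rightarrow> (nat \<Rightarrow> real) \<Rightarrow> real \<Rightarrow> real \<Rightarrow> cfun \<Rightarrow> bool" where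
  "condH N A \<theta> b1 b2 g \<longleftrightarrow>
     (\<forall>\<omega>\<in>Sig N A. exp (Re (g \<omega>)) \<le> b1) \<and> (\<forall>k\<ge>1. var N A k g \<le> b2 * \<theta> k ^ k)"

end

theory Submission
  imports Defs "HOL-Analysis.Analysis"
begin


lemma exp_diff_bound:
  fixes x y :: complex
  shows "cmod (exp x - exp y) \<le> exp (Re y) * exp (cmod (x - y)) * cmod (x - y)"
proof -
  let ?B = "exp (Re y) * exp (cmod (x - y))"
  have "cmod (exp x - exp y) \<le> ?B * cmod (x - y)"
  proof (rule field_differentiable_bound[where S="cball y (cmod (x - y))" and f=exp and f'=exp])
    show "convex (cball y (cmod (x - y)))" by simp
    show "(exp has_field_derivative exp z) (at z within cball y (cmod (x - y)))" for z
      by (rule DERIV_subset[OF DERIV_exp]) simp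
    show "cmod (exp z) \<le> ?B" if "z \<in> cball y (cmod (x - y))" for z
    proof -
      have "Re z - Re y \<le> cmod (z - y)" using complex_Re_le_cmod[of "z - y"] by simp
      also have "\<dots> \<le> cmod (x - y)" using that by (simp add: dist_norm norm_minus_commute)
      finally have "Re z \<le> Re y + cmod (x - y)" by simp
      then have "exp (Re z) \<le> exp (Re y + cmod (x - y))" by simp
      then show ?thesis by (simp add: exp_add)
    qed
    show "x \<in> cball y (cmod (x - y))" by (simp add: dist_norm norm_minus_commute)
    show "y \<in> cball y (cmod (x - y))" by simp
  qed
  then show ?thesis by simp
qed

locale setting =
  fixes N :: nat and A :: "nat \<Rightarrow> nat \<Rightarrow> nat" and D r :: real
  assumes N1: "N \<ge> 1" and Sne: "Sig N A \<noteq> {}" and Dpos: "D > 0" and r0: "0 < r" and r1: "r < 1"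
begin

definition w :: "nat \<Rightarrow> real" where "w k = D ^ k * r ^ (k * (k + 1))"
definition Dp :: real where "Dp = max 1 D"

lemma Dp_ge1: "Dp \<ge> 1" and D_le_Dp: "D \<le> Dp" by (auto simp: Dp_def)

lemma w_pos: "w k > 0" using Dpos r0 by (simp add: w_def)
lemma w_0: "w 0 = 1" by (simp add: w_def)

lemma theta_w: "((\<lambda>m. D * r ^ m) (Suc k)) ^ k = w k"
  by (simp add: w_def power_mult_distrib power_mult[symmetric] mult.commute power_add)

lemma w_shift: "w (a + d) = w a * D ^ d * r ^ (d * (2 * a + d + 1))"
proof -
  have e: "(a + d) * (a + d + 1) = a * (a + 1) + d * (2 * a + d + 1)" by algebra
  show ?thesis unfolding w_def e by (simp add: power_add mult_ac)
qed

lemma w_Suc_le: "w (Suc k) \<le> Dp * w k"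
proof -
  have "w (Suc k) = w k * D * r ^ (2 * k + 2)" using w_shift[of k 1] by simp
  also have "\<dots> \<le> w k * Dp * 1"
    using w_pos[of k] D_le_Dp Dpos r0 r1
    by (intro mult_mono power_le_one) auto
  finally show ?thesis by (simp add: mult.commute)
qed

lemma theta_Suc_le: "(D * r ^ Suc j) ^ Suc j \<le> D * w j"
proof -
  have "(D * r ^ Suc j) ^ Suc j = D * w j * r ^ Suc j"
    by (simp add: w_def power_mult_distrib power_mult[symmetric] power_add mult_ac)
  also have "\<dots> \<le> D * w j * 1"
    using w_pos[of j] Dpos r0 r1 by (intro mult_left_mono power_le_one) auto
  finally show ?thesis by simp
qed

lemma exists_thr: "\<exists>k. Dp * r ^ k \<le> 1"
proof -
  have "(\<lambda>k. r ^ k) \<longlonglongrightarrow> 0" using r0 r1 by (intro LIMSEQ_power_zero) auto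
  moreover have "1 / Dp > 0" using Dp_ge1 by simp
  ultimately have "\<forall>\<^sub>F k in sequentially. r ^ k < 1 / Dp"
    using order_tendstoD(2) by blast
  then obtain k where "r ^ k < 1 / Dp" by (meson eventually_sequentially order.refl)
  then have "Dp * r ^ k \<le> 1" using Dp_ge1 by (simp add: field_simps)
  then show ?thesis by blast
qed

definition k0 :: nat where "k0 = (SOME k. Dp * r ^ k \<le> 1)"

lemma k0: "Dp * r ^ k0 \<le> 1" unfolding k0_def using exists_thr by (rule someI_ex)

lemma k0_ge: "k \<ge> k0 \<Longrightarrow> Dp * r ^ k \<le> 1"
proof -
  assume "k \<ge> k0"
  then have "r ^ k \<le> r ^ k0" using r0 r1 by (intro power_decreasing) auto
  then have "Dp * r ^ k \<le> Dp * r ^ k0" using Dp_ge1 by simp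
  then show ?thesis using k0 by simp
qed

lemma w_ratio: assumes "a \<le> b" shows "w b \<le> w a * (Dp * r ^ (b + 1)) ^ (b - a)"
proof -
  define d where "d = b - a"
  have b: "b = a + d" using assms d_def by simp
  have "w b = w a * D ^ d * r ^ (d * (2 * a + d + 1))" unfolding b by (rule w_shift)
  also have "\<dots> \<le> w a * Dp ^ d * r ^ (d * (b + 1))"
  proof -
    have 1: "D ^ d \<le> Dp ^ d" using Dpos D_le_Dp by (intro power_mono) auto
    have 2: "r ^ (d * (2 * a + d + 1)) \<le> r ^ (d * (b + 1))"
      using r0 r1 unfolding b by (intro power_decreasing) auto
    have "w a * D ^ d \<le> w a * Dp ^ d" using 1 w_pos[of a] by simp
    then show ?thesis using 2 w_pos[of a] Dpos Dp_ge1 r0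
      by (intro mult_mono) auto
  qed
  also have "\<dots> = w a * (Dp * r ^ (b + 1)) ^ (b - a)"
    by (simp add: d_def power_mult_distrib power_mult[symmetric] mult.commute power_add[symmetric])
  finally show ?thesis .
qed

definition P :: real where "P = Dp ^ k0"

lemma P_ge1: "P \<ge> 1" unfolding P_def using Dp_ge1 by simp

lemma w_P: assumes "a \<le> b" shows "w b \<le> P * w a"
proof -
  have "(Dp * r ^ (b + 1)) ^ (b - a) \<le> P"
  proof (cases "b + 1 \<ge> k0")
    case True
    then have "Dp * r ^ (b + 1) \<le> 1" by (rule k0_ge)
    moreover have "Dp * r ^ (b + 1) \<ge> 0" using Dp_ge1 r0 by simp
    ultimately have "(Dp * r ^ (b + 1)) ^ (b - a) \<le> 1" by (simp add: power_le_one)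
    then show ?thesis using P_ge1 by simp
  next
    case False
    have "(Dp * r ^ (b + 1)) ^ (b - a) \<le> Dp ^ (b - a)"
    proof (intro power_mono)
      have "r ^ (b + 1) \<le> 1" using r0 r1 by (intro power_le_one) auto
      then show "Dp * r ^ (b + 1) \<le> Dp" using Dp_ge1 mult_left_mono[of "r^(b+1)" 1 Dp] by simp
    qed (use Dp_ge1 r0 in auto)
    also have "\<dots> \<le> Dp ^ k0" using False Dp_ge1 by (intro power_increasing) auto
    finally show ?thesis by (simp add: P_def)
  qed
  then have "w a * (Dp * r ^ (b + 1)) ^ (b - a) \<le> w a * P"
    using w_pos[of a] by simp
  then show ?thesis using w_ratio[OF assms] by (simp add: mult.commute)
qed

lemma w_shift_q: assumes "j + q \<ge> m" shows "w (j + q) \<le> Dp ^ q * r ^ (2 * q * (m - q)) * w j"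
proof -
  have "w (j + q) = w j * D ^ q * r ^ (q * (2 * j + q + 1))" by (rule w_shift)
  also have "\<dots> \<le> w j * Dp ^ q * r ^ (2 * q * (m - q))"
  proof -
    have e: "2 * q * (m - q) \<le> q * (2 * j + q + 1)"
    proof -
      have "m - q \<le> j" using assms by simp
      then have "2 * q * (m - q) \<le> 2 * q * j" by simp
      also have "\<dots> \<le> q * (2 * j + q + 1)" by (simp add: algebra_simps)
      finally show ?thesis .
    qed
    have 1: "D ^ q \<le> Dp ^ q" using Dpos D_le_Dp by (intro power_mono) auto
    have 2: "r ^ (q * (2 * j + q + 1)) \<le> r ^ (2 * q * (m - q))"
      using r0 r1 e by (intro power_decreasing) auto
    have "w j * D ^ q \<le> w j * Dp ^ q" using 1 w_pos[of j] by simp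
    then show ?thesis using 2 w_pos[of j] Dpos Dp_ge1 r0
      by (intro mult_mono) auto
  qed
  finally show ?thesis by (simp add: mult_ac)
qed

lemma w_Q: "w (max (j + q) m) \<le> P * Dp ^ q * r ^ (2 * q * (m - q)) * w j"
proof (cases "j + q \<ge> m")
  case True
  then have "w (max (j + q) m) = w (j + q)" by simp
  also have "\<dots> \<le> Dp ^ q * r ^ (2 * q * (m - q)) * w j" using True by (rule w_shift_q)
  also have "\<dots> \<le> P * (Dp ^ q * r ^ (2 * q * (m - q)) * w j)"
  proof -
    have "0 \<le> Dp ^ q * r ^ (2 * q * (m - q)) * w j" using w_pos[of j] Dp_ge1 r0 by simp
    then show ?thesis using P_ge1 mult_right_mono[of 1 P] by fastforce
  qed
  finally show ?thesis by (simp add: mult_ac)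
next
  case False
  then have m: "max (j + q) m = (m - q) + q" by simp
  have "w (max (j + q) m) \<le> Dp ^ q * r ^ (2 * q * (m - q)) * w (m - q)"
    unfolding m by (rule w_shift_q) simp
  also have "\<dots> \<le> Dp ^ q * r ^ (2 * q * (m - q)) * (P * w j)"
    using False Dp_ge1 r0 by (intro mult_left_mono w_P) auto
  finally show ?thesis by (simp add: mult_ac)
qed

lemma w_small: assumes "m \<ge> 2 * q + k0" shows "w m \<le> r ^ (2 * q * (m - q))"
proof -
  have "w m \<le> w 0 * (Dp * r ^ (m + 1)) ^ m" using w_ratio[of 0 m] by simp
  also have "\<dots> = (Dp * r ^ (m + 1)) ^ m" by (simp add: w_0)
  also have "\<dots> \<le> (r ^ (2 * q)) ^ m"
  proof (intro power_mono)
    have "m + 1 = 2 * q + (m + 1 - 2 * q)" using assms by simp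
    then have "Dp * r ^ (m + 1) = r ^ (2 * q) * (Dp * r ^ (m + 1 - 2 * q))"
      by (metis mult.left_commute power_add)
    also have "\<dots> \<le> r ^ (2 * q) * 1"
      using assms r0 by (intro mult_left_mono k0_ge) auto
    finally show "Dp * r ^ (m + 1) \<le> r ^ (2 * q)" by simp
  qed (use Dp_ge1 r0 in auto)
  also have "\<dots> = r ^ (2 * q * m)" by (simp add: power_mult)
  also have "\<dots> \<le> r ^ (2 * q * (m - q))" using r0 r1 by (intro power_decreasing) auto
  finally show ?thesis .
qed

definition Th :: real where "Th = Dp ^ k0"

lemma theta_bound: "(D * r ^ k) ^ k \<le> Th"
proof (cases "k \<ge> k0")
  case True
  then have "D * r ^ k \<le> 1" using k0_ge[of k] D_le_Dp r0
    by (meson mult_right_mono order_trans zero_le_power less_imp_le)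
  then have "(D * r ^ k) ^ k \<le> 1" using Dpos r0 by (simp add: power_le_one)
  then show ?thesis using Dp_ge1 unfolding Th_def by (meson one_le_power order_trans)
next
  case False
  have "D * r ^ k \<le> Dp"
  proof -
    have "r ^ k \<le> 1" using r0 r1 by (intro power_le_one) auto
    then have "D * r ^ k \<le> D" using Dpos mult_left_mono[of "r^k" 1 D] by simp
    then show ?thesis using D_le_Dp by simp
  qed
  then have "(D * r ^ k) ^ k \<le> Dp ^ k" using Dpos r0 by (intro power_mono) auto
  also have "\<dots> \<le> Dp ^ k0" using False Dp_ge1 by (intro power_increasing) auto
  finally show ?thesis by (simp add: Th_def)
qed

end



lemma Sig_shift: "\<omega>' \<in> Sig N A \<Longrightarrow> shiftA \<omega>' \<in> Sig N A"
  by (simp add: Sig_def shiftA_def)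

lemma cons_Sig: "\<omega> \<in> Sig N A \<Longrightarrow> a < N \<Longrightarrow> A a (\<omega> 0) = 1 \<Longrightarrow> case_nat a \<omega> \<in> Sig N A"
  unfolding Sig_def by (auto split: nat.split)

lemma preimage_eq:
  assumes "\<omega> \<in> Sig N A"
  shows "{\<omega>'. \<omega>' \<in> Sig N A \<and> shiftA \<omega>' = \<omega>} = (\<lambda>a. case_nat a \<omega>) ` {a. a < N \<and> A a (\<omega> 0) = 1}"
proof (intro equalityI subsetI)
  fix x assume "x \<in> {\<omega>'. \<omega>' \<in> Sig N A \<and> shiftA \<omega>' = \<omega>}"
  then have x: "x \<in> Sig N A" "shiftA x = \<omega>" by auto
  have "x = case_nat (x 0) \<omega>"
    using x(2) by (auto simp: shiftA_def fun_eq_iff split: nat.split)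
  moreover have "x 0 < N" "A (x 0) (\<omega> 0) = 1"
    using x unfolding Sig_def shiftA_def by (auto dest: spec[of _ 0])
  ultimately show "x \<in> (\<lambda>a. case_nat a \<omega>) ` {a. a < N \<and> A a (\<omega> 0) = 1}" by blast
next
  fix x assume "x \<in> (\<lambda>a. case_nat a \<omega>) ` {a. a < N \<and> A a (\<omega> 0) = 1}"
  then obtain a where "a < N" "A a (\<omega> 0) = 1" "x = case_nat a \<omega>" by auto
  then show "x \<in> {\<omega>'. \<omega>' \<in> Sig N A \<and> shiftA \<omega>' = \<omega>}"
    using cons_Sig[OF assms] by (auto simp: shiftA_def)
qed

lemma inj_cons: "inj_on (\<lambda>a. case_nat a \<omega>) X"
  by (rule inj_onI) (metis nat.simps(4))

lemma Lop_eq: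
  assumes "\<omega> \<in> Sig N A"
  shows "Lop N A g f \<omega> = (\<Sum>a\<in>{a. a < N \<and> A a (\<omega> 0) = 1}. exp (g (case_nat a \<omega>)) * f (case_nat a \<omega>))"
  unfolding Lop_def preimage_eq[OF assms] by (subst sum.reindex[OF inj_cons]) simp

lemma Lop_out:
  assumes "\<omega> \<notin> Sig N A"
  shows "Lop N A g f \<omega> = 0"
proof -
  have e: "{\<omega>'. \<omega>' \<in> Sig N A \<and> shiftA \<omega>' = \<omega>} = {}" using assms Sig_shift by blast
  show ?thesis unfolding Lop_def e by simp
qed

lemma Lop_lin: "Lop N A g (\<lambda>\<omega>. c * f \<omega> + d * h \<omega>) = (\<lambda>\<omega>. c * Lop N A g f \<omega> + d * Lop N A g h \<omega>)"
  unfolding Lop_def by (auto simp: fun_eq_iff sum_distrib_left sum.distrib algebra_simps)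

lemma Lpow_lin: "(Lop N A g ^^ q) (\<lambda>\<omega>. c * f \<omega> + d * h \<omega>) = (\<lambda>\<omega>. c * (Lop N A g ^^ q) f \<omega> + d * (Lop N A g ^^ q) h \<omega>)"
  by (induction q) (simp_all add: Lop_lin)

lemma Lop_sum: "Lop N A g (\<lambda>\<omega>. \<Sum>i\<in>I. c i * f i \<omega>) = (\<lambda>\<omega>. \<Sum>i\<in>I. c i * Lop N A g (f i) \<omega>)"
proof (rule ext)
  fix \<omega>
  let ?P = "{\<omega>'. \<omega>' \<in> Sig N A \<and> shiftA \<omega>' = \<omega>}"
  have "Lop N A g (\<lambda>\<omega>. \<Sum>i\<in>I. c i * f i \<omega>) \<omega> = (\<Sum>\<omega>'\<in>?P. \<Sum>i\<in>I. exp (g \<omega>') * (c i * f i \<omega>'))"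
    unfolding Lop_def by (simp add: sum_distrib_left)
  also have "\<dots> = (\<Sum>i\<in>I. \<Sum>\<omega>'\<in>?P. exp (g \<omega>') * (c i * f i \<omega>'))" by (rule sum.swap)
  also have "\<dots> = (\<Sum>i\<in>I. c i * Lop N A g (f i) \<omega>)"
    unfolding Lop_def by (simp add: sum_distrib_left mult_ac)
  finally show "Lop N A g (\<lambda>\<omega>. \<Sum>i\<in>I. c i * f i \<omega>) \<omega> = (\<Sum>i\<in>I. c i * Lop N A g (f i) \<omega>)" .
qed

lemma Lpow_sum: "(Lop N A g ^^ q) (\<lambda>\<omega>. \<Sum>i\<in>I. c i * f i \<omega>) = (\<lambda>\<omega>. \<Sum>i\<in>I. c i * (Lop N A g ^^ q) (f i) \<omega>)"
  by (induction q) (simp_all add: Lop_sum)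

lemma Lpow_out: "q \<ge> 1 \<Longrightarrow> \<omega> \<notin> Sig N A \<Longrightarrow> (Lop N A g ^^ q) f \<omega> = 0"
  by (cases q) (auto simp: Lop_out)

definition prof :: "nat \<Rightarrow> (nat \<Rightarrow> nat \<Rightarrow> nat) \<Rightarrow> cfun \<Rightarrow> real \<Rightarrow> (nat \<Rightarrow> real) \<Rightarrow> bool" where
  "prof N A f s a \<longleftrightarrow> (\<forall>\<omega>\<in>Sig N A. cmod (f \<omega>) \<le> s) \<and>
     (\<forall>j \<omega> \<omega>'. \<omega> \<in> Sig N A \<longrightarrow> \<omega>' \<in> Sig N A \<longrightarrow> (\<forall>i<j. \<omega> i = \<omega>' i) \<longrightarrow> cmod (f \<omega> - f \<omega>') \<le> a j)"

lemma profD1: "prof N A f s a \<Longrightarrow> \<omega> \<in> Sig N A \<Longrightarrow> cmod (f \<omega>) \<le> s"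
  unfolding prof_def by blast

lemma profD2: "prof N A f s a \<Longrightarrow> \<omega> \<in> Sig N A \<Longrightarrow> \<omega>' \<in> Sig N A \<Longrightarrow> \<forall>i<j. \<omega> i = \<omega>' i \<Longrightarrow> cmod (f \<omega> - f \<omega>') \<le> a j"
  unfolding prof_def by blast

lemma prof_mono: "prof N A f s a \<Longrightarrow> s \<le> s' \<Longrightarrow> (\<And>j. a j \<le> a' j) \<Longrightarrow> prof N A f s' a'"
  unfolding prof_def by (meson order_trans)

lemma prof_diff: assumes "prof N A f s1 a1" "prof N A h s2 a2" shows
   "prof N A (\<lambda>\<omega>. f \<omega> - h \<omega>) (s1 + s2) (\<lambda>j. a1 j + a2 j)"
proof -
  have f1: "\<And>\<omega>. \<omega> \<in> Sig N A \<Longrightarrow> cmod (f \<omega>) \<le> s1" and h1: "\<And>\<omega>. \<omega> \<in> Sig N A \<Longrightarrow> cmod (h \<omega>) \<le> s2"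
    using assms unfolding prof_def by auto
  have f2: "\<And>j \<omega> \<omega>'. \<omega> \<in> Sig N A \<Longrightarrow> \<omega>' \<in> Sig N A \<Longrightarrow> (\<forall>i<j. \<omega> i = \<omega>' i) \<Longrightarrow> cmod (f \<omega> - f \<omega>') \<le> a1 j"
   and h2: "\<And>j \<omega> \<omega>'. \<omega> \<in> Sig N A \<Longrightarrow> \<omega>' \<in> Sig N A \<Longrightarrow> (\<forall>i<j. \<omega> i = \<omega>' i) \<Longrightarrow> cmod (h \<omega> - h \<omega>') \<le> a2 j"
    using assms unfolding prof_def by auto
  show ?thesis unfolding prof_def
  proof (intro conjI ballI allI impI)
    fix \<omega> assume "\<omega> \<in> Sig N A"
    then show "cmod (f \<omega> - h \<omega>) \<le> s1 + s2" using f1 h1 by (meson add_mono norm_triangle_ineq4 order_trans)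
  next
    fix j \<omega> \<omega>'
    assume a: "\<omega> \<in> Sig N A" "\<omega>' \<in> Sig N A" "\<forall>i<j. \<omega> i = \<omega>' i"
    have "cmod (f \<omega> - h \<omega> - (f \<omega>' - h \<omega>')) = cmod ((f \<omega> - f \<omega>') - (h \<omega> - h \<omega>'))"
      by (simp add: algebra_simps)
    also have "\<dots> \<le> cmod (f \<omega> - f \<omega>') + cmod (h \<omega> - h \<omega>')" by (rule norm_triangle_ineq4)
    also have "\<dots> \<le> a1 j + a2 j" using a f2 h2 by (intro add_mono) auto
    finally show "cmod (f \<omega> - h \<omega> - (f \<omega>' - h \<omega>')) \<le> a1 j + a2 j" .
  qed
qed

lemma sum_bound_N:
  fixes F :: "nat \<Rightarrow> complex"
  assumes "I \<subseteq> {..<N}" "\<And>a. a \<in> I \<Longrightarrow> cmod (F a) \<le> B" "B \<ge> 0"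
  shows "cmod (\<Sum>a\<in>I. F a) \<le> real N * B"
proof -
  have fin: "finite I" using assms(1) finite_subset by blast
  have "cmod (\<Sum>a\<in>I. F a) \<le> (\<Sum>a\<in>I. cmod (F a))" by (rule norm_sum)
  also have "\<dots> \<le> (\<Sum>a\<in>I. B)" using assms(2) by (rule sum_mono)
  also have "\<dots> = card I * B" by simp
  also have "\<dots> \<le> real N * B"
  proof -
    have "card I \<le> card {..<N}" using assms(1) by (intro card_mono) auto
    then have "real (card I) \<le> real N" by simp
    then show ?thesis using assms(3) by (intro mult_right_mono) auto
  qed
  finally show ?thesis .
qed

context setting
begin

lemma prof_nonneg: assumes "prof N A f s a" shows "s \<ge> 0" "a j \<ge> 0"
proof -
  obtain \<omega> where w: "\<omega> \<in> Sig N A" using Sne by blast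
  then show "s \<ge> 0" using assms unfolding prof_def by (meson norm_ge_zero order_trans)
  have "cmod (f \<omega> - f \<omega>) \<le> a j" using assms w unfolding prof_def by blast
  then show "a j \<ge> 0" by simp
qed

lemma var_g:
  assumes "g \<in> Vsp N A" "condH N A (\<lambda>m. D * r ^ m) b1 b2 g" "k \<ge> 1"
    "\<omega> \<in> Sig N A" "\<omega>' \<in> Sig N A" "\<forall>i<k. \<omega> i = \<omega>' i"
  shows "cmod (g \<omega> - g \<omega>') \<le> b2 * (D * r ^ k) ^ k"
proof -
  have "cmod (g \<omega> - g \<omega>') \<in> varset N A k g" unfolding varset_def using assms(4-6) by blast
  moreover have "bdd_above (varset N A k g)" using assms(1) by (simp add: Vsp_def)
  ultimately have "cmod (g \<omega> - g \<omega>') \<le> var N A k g" unfolding var_def by (rule cSup_upper)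
  also have "\<dots> \<le> b2 * (D * r ^ k) ^ k" using assms(2,3) unfolding condH_def by auto
  finally show ?thesis .
qed

definition E :: "real \<Rightarrow> real" where "E b2 = b2 * exp (b2 * Th)"

lemma E_pos: "b2 > 0 \<Longrightarrow> E b2 > 0" by (simp add: E_def)

lemma step:
  assumes g: "g \<in> Vsp N A" "condH N A (\<lambda>m. D * r ^ m) b1 b2 g" "b1 > 0" "b2 > 0"
    and pf: "prof N A f s av"
  shows "prof N A (Lop N A g f) (real N * b1 * s)
     (\<lambda>j. if j = 0 then 2 * real N * b1 * s else real N * b1 * (av (Suc j) + E b2 * D * w j * s))"
proof -
  have s0: "s \<ge> 0" and a0: "\<And>j. av j \<ge> 0" using prof_nonneg[OF pf] by auto
  have eg: "cmod (exp (g \<omega>)) \<le> b1" if "\<omega> \<in> Sig N A" for \<omega>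
    using g(2) that unfolding condH_def by simp
  let ?I = "\<lambda>\<omega>. {a. a < N \<and> A a (\<omega> 0) = 1}"
  have Isub: "?I \<omega> \<subseteq> {..<N}" for \<omega> by auto
  have sup: "cmod (Lop N A g f \<omega>) \<le> real N * b1 * s" if w: "\<omega> \<in> Sig N A" for \<omega>
  proof -
    have "cmod (Lop N A g f \<omega>) \<le> real N * (b1 * s)"
      unfolding Lop_eq[OF w]
    proof (rule sum_bound_N[OF Isub])
      fix a assume "a \<in> ?I \<omega>"
      then have c: "case_nat a \<omega> \<in> Sig N A" using cons_Sig[OF w] by auto
      have "cmod (exp (g (case_nat a \<omega>)) * f (case_nat a \<omega>)) = cmod (exp (g (case_nat a \<omega>))) * cmod (f (case_nat a \<omega>))"
        by (rule norm_mult)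
      also have "\<dots> \<le> b1 * s" using eg[OF c] profD1[OF pf c] g(3)
        by (intro mult_mono) auto
      finally show "cmod (exp (g (case_nat a \<omega>)) * f (case_nat a \<omega>)) \<le> b1 * s" .
    qed (use g s0 in auto)
    then show ?thesis by (simp add: mult_ac)
  qed
  show ?thesis unfolding prof_def
  proof (intro conjI ballI allI impI)
    fix \<omega> assume "\<omega> \<in> Sig N A" then show "cmod (Lop N A g f \<omega>) \<le> real N * b1 * s" by (rule sup)
  next
    fix j \<omega> \<omega>' assume w: "\<omega> \<in> Sig N A" and w': "\<omega>' \<in> Sig N A" and ag: "\<forall>i<j. \<omega> i = \<omega>' i"
    show "cmod (Lop N A g f \<omega> - Lop N A g f \<omega>') \<le> (if j = 0 then 2 * real N * b1 * s else real N * b1 * (av (Suc j) + E b2 * D * w j * s))"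
    proof (cases "j = 0")
      case True
      have "cmod (Lop N A g f \<omega> - Lop N A g f \<omega>') \<le> cmod (Lop N A g f \<omega>) + cmod (Lop N A g f \<omega>')"
        by (rule norm_triangle_ineq4)
      also have "\<dots> \<le> real N * b1 * s + real N * b1 * s" using sup[OF w] sup[OF w'] by (rule add_mono)
      finally show ?thesis using True by (simp add: mult_ac)
    next
      case False
      then have "\<omega> 0 = \<omega>' 0" using ag by auto
      then have Ieq: "?I \<omega>' = ?I \<omega>" by simp
      have "Lop N A g f \<omega> - Lop N A g f \<omega>' = (\<Sum>a\<in>?I \<omega>. exp (g (case_nat a \<omega>)) * f (case_nat a \<omega>) - exp (g (case_nat a \<omega>')) * f (case_nat a \<omega>'))"
        unfolding Lop_eq[OF w] Lop_eq[OF w'] Ieq by (simp add: sum_subtractf)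
      also have "cmod \<dots> \<le> real N * (b1 * (av (Suc j) + E b2 * D * w j * s))"
      proof (rule sum_bound_N[OF Isub])
        fix a assume aI: "a \<in> ?I \<omega>"
        let ?x = "case_nat a \<omega>" and ?y = "case_nat a \<omega>'"
        have x: "?x \<in> Sig N A" using cons_Sig[OF w] aI by auto
        have y: "?y \<in> Sig N A" using cons_Sig[OF w'] aI Ieq by auto
        have agxy: "\<forall>i<Suc j. ?x i = ?y i" using ag by (auto split: nat.split)
        have gd: "cmod (g ?x - g ?y) \<le> b2 * (D * r ^ Suc j) ^ Suc j"
          by (rule var_g[OF g(1,2) _ x y agxy]) simp
        have th: "(D * r ^ Suc j) ^ Suc j \<le> Th" by (rule theta_bound)
        have th2: "(D * r ^ Suc j) ^ Suc j \<le> D * w j" by (rule theta_Suc_le)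
        have gd2: "cmod (g ?x - g ?y) \<le> b2 * Th"
          using gd mult_left_mono[OF th, of b2] g(4) by linarith
        have ed: "cmod (exp (g ?x) - exp (g ?y)) \<le> b1 * (E b2 * D * w j)"
        proof -
          have "cmod (exp (g ?x) - exp (g ?y)) \<le> exp (Re (g ?y)) * exp (cmod (g ?x - g ?y)) * cmod (g ?x - g ?y)"
            by (rule exp_diff_bound)
          also have "\<dots> \<le> b1 * exp (b2 * Th) * (b2 * (D * w j))"
          proof -
            have e1: "exp (Re (g ?y)) \<le> b1" using eg[OF y] by simp
            have e2: "exp (cmod (g ?x - g ?y)) \<le> exp (b2 * Th)" using gd2 by simp
            have e3: "cmod (g ?x - g ?y) \<le> b2 * (D * w j)"
              using gd mult_left_mono[OF th2, of b2] g(4) by linarith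
            have "exp (Re (g ?y)) * exp (cmod (g ?x - g ?y)) \<le> b1 * exp (b2 * Th)"
              by (rule mult_mono[OF e1 e2]) (use g(3) in auto)
            then show ?thesis
              by (rule mult_mono[OF _ e3]) (use g(3) in auto)
          qed
          finally show ?thesis by (simp add: E_def mult_ac)
        qed
        have fx: "cmod (f ?x) \<le> s" by (rule profD1[OF pf x])
        have fxy: "cmod (f ?x - f ?y) \<le> av (Suc j)" by (rule profD2[OF pf x y agxy])
        have eq: "exp (g ?x) * f ?x - exp (g ?y) * f ?y = (exp (g ?x) - exp (g ?y)) * f ?x + exp (g ?y) * (f ?x - f ?y)"
          by (simp add: algebra_simps)
        have "cmod (exp (g ?x) * f ?x - exp (g ?y) * f ?y) \<le> cmod ((exp (g ?x) - exp (g ?y)) * f ?x) + cmod (exp (g ?y) * (f ?x - f ?y))"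
          unfolding eq by (rule norm_triangle_ineq)
        also have "\<dots> \<le> b1 * (E b2 * D * w j) * s + b1 * av (Suc j)"
        proof -
          have nn: "0 \<le> b1 * (E b2 * D * w j)" using E_pos[OF g(4)] g(3) w_pos[of j] Dpos by simp
          have t1: "cmod (exp (g ?x) - exp (g ?y)) * cmod (f ?x) \<le> b1 * (E b2 * D * w j) * s"
            by (rule mult_mono[OF ed fx nn norm_ge_zero])
          have t2: "cmod (exp (g ?y)) * cmod (f ?x - f ?y) \<le> b1 * av (Suc j)"
            using g(3) by (intro mult_mono[OF eg[OF y] fxy]) auto
          show ?thesis unfolding norm_mult using t1 t2 by (rule add_mono)
        qed
        finally show "cmod (exp (g ?x) * f ?x - exp (g ?y) * f ?y) \<le> b1 * (av (Suc j) + E b2 * D * w j * s)"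
          by (simp add: algebra_simps)
      next
        show "0 \<le> b1 * (av (Suc j) + E b2 * D * w j * s)"
          using E_pos[OF g(4)] g(3) w_pos[of j] Dpos a0[of "Suc j"] s0 by simp
      qed
      finally show ?thesis using False by (simp add: mult_ac)
    qed
  qed
qed

end



context setting
begin

definition M :: "real \<Rightarrow> real \<Rightarrow> real" where "M b1 b2 = real N * b1 * Dp * (1 + E b2 * D)"

lemma M_facts:
  assumes "b1 > 0" "b2 > 0"
  shows "M b1 b2 > 0" "real N * b1 \<le> M b1 b2" "real N * b1 * Dp \<le> M b1 b2"
    "real N * b1 * (E b2 * D) \<le> M b1 b2"
proof -
  have K: "real N * b1 > 0" using N1 assms by simp
  have ED: "E b2 * D > 0" using E_pos[OF assms(2)] Dpos by simp
  show "M b1 b2 > 0" unfolding M_def using K ED Dp_ge1 by simp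
  have K1: "real N * b1 * Dp > 0" using K Dp_ge1 by simp
  have "real N * b1 * Dp \<le> real N * b1 * Dp * (1 + E b2 * D)"
    using K1 ED by (simp add: mult_le_cancel_left1)
  then show "real N * b1 * Dp \<le> M b1 b2" by (simp add: M_def)
  moreover have "real N * b1 \<le> real N * b1 * Dp" using K Dp_ge1 by (simp add: mult_le_cancel_left1)
  ultimately show "real N * b1 \<le> M b1 b2" by linarith
  have "real N * b1 * (E b2 * D) \<le> real N * b1 * (Dp * (1 + E b2 * D))"
  proof (rule mult_left_mono)
    have "E b2 * D \<le> 1 * (1 + E b2 * D)" by simp
    also have "\<dots> \<le> Dp * (1 + E b2 * D)" using Dp_ge1 ED by (intro mult_right_mono) auto
    finally show "E b2 * D \<le> Dp * (1 + E b2 * D)" .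
  qed (use K in auto)
  then show "real N * b1 * (E b2 * D) \<le> M b1 b2" by (simp add: M_def mult_ac)
qed

lemma iterA:
  assumes g: "g \<in> Vsp N A" "condH N A (\<lambda>m. D * r ^ m) b1 b2 g" "b1 > 0" "b2 > 0"
    and pf: "prof N A f \<sigma> (\<lambda>j. C * w j)" and C: "C \<ge> 0"
  shows "prof N A ((Lop N A g ^^ t) f) (M b1 b2 ^ t * \<sigma>) (\<lambda>j. M b1 b2 ^ t * (C + 2 * real t * \<sigma>) * w j)"
proof (induction t)
  case 0
  then show ?case using pf by simp
next
  case (Suc t)
  let ?M = "M b1 b2" and ?K = "real N * b1"
  let ?X = "?M ^ t"
  have s0: "\<sigma> \<ge> 0" using prof_nonneg(1)[OF pf] .
  have Mf: "?M > 0" "?K \<le> ?M" "?K * Dp \<le> ?M" "?K * (E b2 * D) \<le> ?M" using M_facts[OF g(3,4)] by auto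
  have X0: "?X \<ge> 0" using Mf by simp
  have K0: "?K \<ge> 0" using g(3) by simp
  have st: "prof N A (Lop N A g ((Lop N A g ^^ t) f)) (?K * (?X * \<sigma>))
     (\<lambda>j. if j = 0 then 2 * real N * b1 * (?X * \<sigma>) else ?K * (?X * (C + 2 * real t * \<sigma>) * w (Suc j) + E b2 * D * w j * (?X * \<sigma>)))"
    using step[OF g Suc.IH] by simp
  show ?case
  proof (rule prof_mono)
    show "prof N A ((Lop N A g ^^ Suc t) f) (?K * (?X * \<sigma>))
     (\<lambda>j. if j = 0 then 2 * real N * b1 * (?X * \<sigma>) else ?K * (?X * (C + 2 * real t * \<sigma>) * w (Suc j) + E b2 * D * w j * (?X * \<sigma>)))"
      using st by simp
    show "?K * (?X * \<sigma>) \<le> ?M ^ Suc t * \<sigma>"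
      using mult_right_mono[OF Mf(2), of "?X * \<sigma>"] X0 s0 by (simp add: mult_ac)
  next
    fix j
    show "(if j = 0 then 2 * real N * b1 * (?X * \<sigma>) else ?K * (?X * (C + 2 * real t * \<sigma>) * w (Suc j) + E b2 * D * w j * (?X * \<sigma>)))
       \<le> ?M ^ Suc t * (C + 2 * real (Suc t) * \<sigma>) * w j"
    proof (cases "j = 0")
      case True
      have "?K * (?X * \<sigma>) \<le> ?M * (?X * \<sigma>)" using Mf(2) X0 s0 by (intro mult_right_mono) auto
      moreover have "?M * (?X * \<sigma>) * 2 \<le> ?M * ?X * (C + 2 * real (Suc t) * \<sigma>)"
      proof -
        have "2 * \<sigma> \<le> C + 2 * real (Suc t) * \<sigma>" using C s0 by (simp add: algebra_simps)
        then have "?M * ?X * (2 * \<sigma>) \<le> ?M * ?X * (C + 2 * real (Suc t) * \<sigma>)"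
          using Mf X0 by (intro mult_left_mono) auto
        then show ?thesis by (simp add: mult_ac)
      qed
      ultimately show ?thesis using True by (simp add: w_0 mult_ac)
    next
      case False
      let ?Y = "?X * w j"
      have Y0: "?Y \<ge> 0" using X0 w_pos[of j] by simp
      have a0: "C + 2 * real t * \<sigma> \<ge> 0" using C s0 by simp
      have b1: "?K * (?X * (C + 2 * real t * \<sigma>) * w (Suc j)) \<le> ?M * ((C + 2 * real t * \<sigma>) * ?Y)"
      proof -
        have "?X * (C + 2 * real t * \<sigma>) * w (Suc j) \<le> ?X * (C + 2 * real t * \<sigma>) * (Dp * w j)"
          using X0 a0 w_Suc_le[of j] by (intro mult_left_mono) auto
        then have "?K * (?X * (C + 2 * real t * \<sigma>) * w (Suc j)) \<le> ?K * (?X * (C + 2 * real t * \<sigma>) * (Dp * w j))"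
          using K0 by (rule mult_left_mono)
        also have "\<dots> = (?K * Dp) * ((C + 2 * real t * \<sigma>) * ?Y)" by (simp add: mult_ac)
        also have "\<dots> \<le> ?M * ((C + 2 * real t * \<sigma>) * ?Y)"
          using Mf(3) a0 Y0 by (intro mult_right_mono) auto
        finally show ?thesis .
      qed
      have b2: "?K * (E b2 * D * w j * (?X * \<sigma>)) \<le> ?M * (\<sigma> * ?Y)"
      proof -
        have "?K * (E b2 * D * w j * (?X * \<sigma>)) = (?K * (E b2 * D)) * (\<sigma> * ?Y)" by (simp add: mult_ac)
        also have "\<dots> \<le> ?M * (\<sigma> * ?Y)" using Mf(4) s0 Y0 by (intro mult_right_mono) auto
        finally show ?thesis .
      qed
      have b3: "?M * ((C + 2 * real t * \<sigma>) * ?Y) + ?M * (\<sigma> * ?Y) \<le> ?M ^ Suc t * (C + 2 * real (Suc t) * \<sigma>) * w j"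
      proof -
        have "?M * ((C + 2 * real t * \<sigma>) * ?Y) + ?M * (\<sigma> * ?Y) = ?M * ?Y * (C + 2 * real t * \<sigma> + \<sigma>)"
          by (simp add: algebra_simps)
        also have "\<dots> \<le> ?M * ?Y * (C + 2 * real (Suc t) * \<sigma>)"
        proof (rule mult_left_mono)
          show "C + 2 * real t * \<sigma> + \<sigma> \<le> C + 2 * real (Suc t) * \<sigma>" using s0 by (simp add: algebra_simps)
          show "0 \<le> ?M * ?Y" using Mf Y0 by simp
        qed
        also have "\<dots> = ?M ^ Suc t * (C + 2 * real (Suc t) * \<sigma>) * w j" by (simp add: mult_ac)
        finally show ?thesis .
      qed
      have "?K * (?X * (C + 2 * real t * \<sigma>) * w (Suc j) + E b2 * D * w j * (?X * \<sigma>))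
          = ?K * (?X * (C + 2 * real t * \<sigma>) * w (Suc j)) + ?K * (E b2 * D * w j * (?X * \<sigma>))"
        by (simp add: distrib_left)
      then show ?thesis using False b1 b2 b3 by simp
    qed
  qed
qed

lemma iterB:
  assumes g: "g \<in> Vsp N A" "condH N A (\<lambda>m. D * r ^ m) b1 b2 g" "b1 > 0" "b2 > 0"
    and pf: "prof N A f (C * w m) (\<lambda>j. 2 * C * w (max j m))" and C: "C \<ge> 0"
  shows "prof N A ((Lop N A g ^^ t) f) (M b1 b2 ^ t * C * w m)
     (\<lambda>j. M b1 b2 ^ t * C * (2 * w (max (j + t) m) + 2 * real t * w m * w j))"
proof (induction t)
  case 0
  then show ?case using pf by (simp add: mult_ac)
next
  case (Suc t)
  let ?M = "M b1 b2" and ?K = "real N * b1"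
  let ?X = "?M ^ t"
  let ?Z = "?X * C"
  have Mf: "?M > 0" "?K \<le> ?M" "?K * Dp \<le> ?M" "?K * (E b2 * D) \<le> ?M" using M_facts[OF g(3,4)] by auto
  have X0: "?X \<ge> 0" using Mf by simp
  have Z0: "?Z \<ge> 0" using X0 C by simp
  have K0: "?K \<ge> 0" using g(3) by simp
  have wm: "w m > 0" by (rule w_pos)
  have st: "prof N A (Lop N A g ((Lop N A g ^^ t) f)) (?K * (?Z * w m))
     (\<lambda>j. if j = 0 then 2 * real N * b1 * (?Z * w m) else ?K * (?Z * (2 * w (max (Suc j + t) m) + 2 * real t * w m * w (Suc j)) + E b2 * D * w j * (?Z * w m)))"
    using step[OF g Suc.IH] by (simp add: mult_ac)
  show ?case
  proof (rule prof_mono)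
    show "prof N A ((Lop N A g ^^ Suc t) f) (?K * (?Z * w m))
     (\<lambda>j. if j = 0 then 2 * real N * b1 * (?Z * w m) else ?K * (?Z * (2 * w (max (Suc j + t) m) + 2 * real t * w m * w (Suc j)) + E b2 * D * w j * (?Z * w m)))"
      using st by simp
    have "?K * (?Z * w m) \<le> ?M * (?Z * w m)"
      using Z0 wm by (intro mult_right_mono[OF Mf(2)]) auto
    then show "?K * (?Z * w m) \<le> ?M ^ Suc t * C * w m" by (simp add: mult_ac)
  next
    fix j
    show "(if j = 0 then 2 * real N * b1 * (?Z * w m) else ?K * (?Z * (2 * w (max (Suc j + t) m) + 2 * real t * w m * w (Suc j)) + E b2 * D * w j * (?Z * w m)))
       \<le> ?M ^ Suc t * C * (2 * w (max (j + Suc t) m) + 2 * real (Suc t) * w m * w j)"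
    proof (cases "j = 0")
      case True
      have "?K * (?Z * w m) \<le> ?M * (?Z * w m)" using Mf(2) Z0 wm by (intro mult_right_mono) auto
      moreover have "?M * (?Z * w m) * 2 \<le> ?M * ?Z * (2 * w (max (Suc t) m) + 2 * real (Suc t) * w m)"
      proof -
        have "2 * w m \<le> 2 * w (max (Suc t) m) + 2 * real (Suc t) * w m"
          using w_pos[of "max (Suc t) m"] wm by (simp add: algebra_simps)
        then have "?M * ?Z * (2 * w m) \<le> ?M * ?Z * (2 * w (max (Suc t) m) + 2 * real (Suc t) * w m)"
          using Mf Z0 by (intro mult_left_mono) auto
        then show ?thesis by (simp add: mult_ac)
      qed
      ultimately show ?thesis using True by (simp add: w_0 mult_ac)
    next
      case False
      have mx: "max (Suc j + t) m = max (j + Suc t) m" by simp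
      have wj: "w j > 0" by (rule w_pos)
      let ?W = "w (max (j + Suc t) m)"
      have W0: "?W > 0" by (rule w_pos)
      have b1: "?K * (?Z * (2 * ?W)) \<le> ?M * (?Z * (2 * ?W))"
        using Mf(2) Z0 W0 by (intro mult_right_mono) auto
      have b2: "?K * (?Z * (2 * real t * w m * w (Suc j))) \<le> ?M * (?Z * (2 * real t * w m * w j))"
      proof -
        have "?Z * (2 * real t * w m * w (Suc j)) \<le> ?Z * (2 * real t * w m * (Dp * w j))"
          using Z0 wm w_Suc_le[of j] by (intro mult_left_mono) auto
        then have "?K * (?Z * (2 * real t * w m * w (Suc j))) \<le> ?K * (?Z * (2 * real t * w m * (Dp * w j)))"
          using K0 by (rule mult_left_mono)
        also have "\<dots> = (?K * Dp) * (?Z * (2 * real t * w m * w j))" by (simp add: mult_ac)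
        also have "\<dots> \<le> ?M * (?Z * (2 * real t * w m * w j))"
          using Mf(3) Z0 wm wj by (intro mult_right_mono) auto
        finally show ?thesis .
      qed
      have b3: "?K * (E b2 * D * w j * (?Z * w m)) \<le> ?M * (?Z * (2 * w m * w j))"
      proof -
        have "?K * (E b2 * D * w j * (?Z * w m)) = (?K * (E b2 * D)) * (?Z * w m * w j)" by (simp add: mult_ac)
        also have "\<dots> \<le> ?M * (?Z * w m * w j)" using Mf(4) Z0 wm wj by (intro mult_right_mono) auto
        also have "\<dots> \<le> ?M * (?Z * (2 * w m * w j))"
        proof (rule mult_left_mono)
          have "0 \<le> ?Z * w m * w j" using Z0 wm wj by simp
          then show "?Z * w m * w j \<le> ?Z * (2 * w m * w j)" by (simp add: mult_ac)
          show "0 \<le> ?M" using Mf by simp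
        qed
        finally show ?thesis .
      qed
      have sum: "?M * (?Z * (2 * ?W)) + ?M * (?Z * (2 * real t * w m * w j)) + ?M * (?Z * (2 * w m * w j))
          = ?M ^ Suc t * C * (2 * ?W + 2 * real (Suc t) * w m * w j)"
        by (simp add: algebra_simps)
      have "?K * (?Z * (2 * w (max (Suc j + t) m) + 2 * real t * w m * w (Suc j)) + E b2 * D * w j * (?Z * w m))
          = ?K * (?Z * (2 * ?W)) + ?K * (?Z * (2 * real t * w m * w (Suc j))) + ?K * (E b2 * D * w j * (?Z * w m))"
        unfolding mx by (simp add: algebra_simps)
      then show ?thesis apply (simp only: if_not_P[OF False]) using b1 b2 b3 sum by linarith
    qed
  qed
qed

end



context setting
begin

lemma theta_w': "(D * r ^ Suc k) ^ k = w k" using theta_w[of k] by simp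
lemma theta_w'': "(D * (r * r ^ k)) ^ k = w k" using theta_w[of k] by simp

lemma prof_var:
  assumes "prof N A f s a"
  shows "bdd_above (varset N A k f)" "var N A k f \<le> a k"
proof -
  have ub: "\<And>x. x \<in> varset N A k f \<Longrightarrow> x \<le> a k"
    unfolding varset_def using profD2[OF assms] by blast
  then show "bdd_above (varset N A k f)" by (meson bdd_aboveI)
  obtain \<omega> where w: "\<omega> \<in> Sig N A" using Sne by blast
  then have "cmod (f \<omega> - f \<omega>) \<in> varset N A k f" unfolding varset_def by blast
  then have "varset N A k f \<noteq> {}" by blast
  then show "var N A k f \<le> a k" unfolding var_def using ub by (rule cSup_least)
qed

lemma var_nonneg:
  assumes "bdd_above (varset N A k f)"
  shows "var N A k f \<ge> 0"
proof -
  obtain \<omega> where w: "\<omega> \<in> Sig N A" using Sne by blast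
  then have "cmod (f \<omega> - f \<omega>) \<in> varset N A k f" unfolding varset_def by blast
  then have "cmod (f \<omega> - f \<omega>) \<le> var N A k f" unfolding var_def using assms by (rule cSup_upper)
  then show ?thesis by simp
qed

lemma var_pt:
  assumes "bdd_above (varset N A k f)" "\<omega> \<in> Sig N A" "\<omega>' \<in> Sig N A" "\<forall>i<k. \<omega> i = \<omega>' i"
  shows "cmod (f \<omega> - f \<omega>') \<le> var N A k f"
proof -
  have "cmod (f \<omega> - f \<omega>') \<in> varset N A k f" unfolding varset_def using assms(2-4) by blast
  then show ?thesis unfolding var_def using assms(1) by (rule cSup_upper)
qed

lemma prof_supnorm:
  assumes "prof N A f s a"
  shows "supnorm N A f \<le> s" "supnorm N A f \<ge> 0" "bdd_above {cmod (f \<omega>) |\<omega>. \<omega> \<in> Sig N A}"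
proof -
  have ub: "\<And>x. x \<in> {cmod (f \<omega>) |\<omega>. \<omega> \<in> Sig N A} \<Longrightarrow> x \<le> s" using profD1[OF assms] by blast
  then show bd: "bdd_above {cmod (f \<omega>) |\<omega>. \<omega> \<in> Sig N A}" by (meson bdd_aboveI)
  obtain \<omega> where w: "\<omega> \<in> Sig N A" using Sne by blast
  then have mem: "cmod (f \<omega>) \<in> {cmod (f \<omega>) |\<omega>. \<omega> \<in> Sig N A}" by blast
  then have "{cmod (f \<omega>) |\<omega>. \<omega> \<in> Sig N A} \<noteq> {}" by blast
  then show "supnorm N A f \<le> s" unfolding supnorm_def using ub by (rule cSup_least)
  have "cmod (f \<omega>) \<le> supnorm N A f" unfolding supnorm_def using mem bd by (rule cSup_upper)
  then show "supnorm N A f \<ge> 0" by (meson norm_ge_zero order_trans)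
qed

lemma prof_Bconsts:
  assumes "prof N A f s (\<lambda>k. Z * w k)" "Z \<ge> 0"
  shows "Z \<in> Bconsts N A (\<lambda>m. D * r ^ m) f"
  unfolding Bconsts_def using prof_var(2)[OF assms(1)] assms(2) by (simp add: theta_w'')

lemma Inf_Bconsts_ge0:
  assumes "Bconsts N A \<theta> f \<noteq> {}"
  shows "Inf (Bconsts N A \<theta> f) \<ge> 0"
  using assms by (intro cInf_greatest) (auto simp: Bconsts_def)

lemma Inf_Bconsts_le:
  assumes "Z \<in> Bconsts N A \<theta> f"
  shows "Inf (Bconsts N A \<theta> f) \<le> Z"
proof (rule cInf_lower[OF assms])
  show "bdd_below (Bconsts N A \<theta> f)" by (rule bdd_belowI[of _ 0]) (auto simp: Bconsts_def)
qed

lemma prof_Bnorm: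
  assumes "prof N A f s (\<lambda>k. Z * w k)" "Z \<ge> 0"
  shows "Bnorm N A (\<lambda>m. D * r ^ m) f \<le> s + Z"
  unfolding Bnorm_def using prof_supnorm(1)[OF assms(1)] Inf_Bconsts_le[OF prof_Bconsts[OF assms]]
  by simp

lemma powr_lim:
  assumes "\<And>k. 0 \<le> v k" "\<And>k. v k \<le> Z * w k" "Z \<ge> 0"
  shows "(\<lambda>k. v k powr (1 / real k)) \<longlonglongrightarrow> 0"
proof (rule tendsto_sandwich[where f="\<lambda>_. 0" and h="\<lambda>k. max 1 Z * D * r * r ^ k"])
  show "\<forall>\<^sub>F k in sequentially. 0 \<le> v k powr (1 / real k)" by simp
  show "\<forall>\<^sub>F k in sequentially. v k powr (1 / real k) \<le> max 1 Z * D * r * r ^ k"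
  proof (rule eventually_sequentiallyI[of 1])
    fix k :: nat assume k: "k \<ge> 1"
    have kp: "real k > 0" using k by simp
    have x0: "D * r ^ Suc k > 0" using Dpos r0 by simp
    have "v k powr (1 / real k) \<le> (Z * w k) powr (1 / real k)"
      using assms by (intro powr_mono2) auto
    also have "\<dots> = Z powr (1 / real k) * w k powr (1 / real k)"
      using assms(3) w_pos[of k] by (simp add: powr_mult)
    also have "w k powr (1 / real k) = D * r ^ Suc k"
    proof -
      have "w k = (D * r ^ Suc k) powr real k" using theta_w'[of k] x0 by (simp add: powr_realpow)
      then have "w k powr (1 / real k) = (D * r ^ Suc k) powr (real k * (1 / real k))"
        by (simp add: powr_powr)
      also have "\<dots> = D * r ^ Suc k" using kp x0 by simp
      finally show ?thesis .
    qed
    also have "Z powr (1 / real k) \<le> max 1 Z"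
    proof (cases "Z \<le> 1")
      case True
      then have "Z powr (1 / real k) \<le> 1" using assms(3) by (intro powr_le1) auto
      then show ?thesis by simp
    next
      case False
      then have "Z powr (1 / real k) \<le> Z powr 1" using kp by (intro powr_mono) (auto simp: field_simps)
      then show ?thesis using False by simp
    qed
    then have "Z powr (1 / real k) * (D * r ^ Suc k) \<le> max 1 Z * (D * r ^ Suc k)"
      using x0 by (intro mult_right_mono) auto
    finally show "v k powr (1 / real k) \<le> max 1 Z * D * r * r ^ k" by (simp add: mult_ac)
  qed
  have "(\<lambda>k. r ^ k) \<longlonglongrightarrow> 0" using r0 r1 by (intro LIMSEQ_power_zero) auto
  then show "(\<lambda>k. max 1 Z * D * r * r ^ k) \<longlonglongrightarrow> 0" by (rule tendsto_mult_right_zero)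
qed simp

lemma prof_Vsp:
  assumes "prof N A f s (\<lambda>k. Z * w k)" "Z \<ge> 0"
  shows "f \<in> Vsp N A"
proof -
  have "(\<lambda>k. var N A k f powr (1 / real k)) \<longlonglongrightarrow> 0"
    using var_nonneg prof_var[OF assms(1)] assms(2) by (intro powr_lim) auto
  then show ?thesis unfolding Vsp_def using prof_var(1)[OF assms(1)] by simp
qed

lemma prof_Bsp:
  assumes "prof N A f s (\<lambda>k. Z * w k)" "Z \<ge> 0" "\<And>\<omega>. \<omega> \<notin> Sig N A \<Longrightarrow> f \<omega> = 0"
  shows "f \<in> Bsp N A (\<lambda>m. D * r ^ m)"
  unfolding Bsp_def using prof_Vsp[OF assms(1,2)] prof_Bconsts[OF assms(1,2)] assms(3) by auto

lemma Bsp_prof: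
  assumes "\<phi> \<in> Bsp N A (\<lambda>m. D * r ^ m)"
  defines "C \<equiv> Inf (Bconsts N A (\<lambda>m. D * r ^ m) \<phi>)"
  shows "prof N A \<phi> (supnorm N A \<phi>) (\<lambda>k. C * w k)" "C \<ge> 0" "supnorm N A \<phi> \<ge> 0"
    "Bnorm N A (\<lambda>m. D * r ^ m) \<phi> = supnorm N A \<phi> + C"
proof -
  have V: "\<phi> \<in> Vsp N A" and ne: "Bconsts N A (\<lambda>m. D * r ^ m) \<phi> \<noteq> {}" using assms(1) unfolding Bsp_def by auto
  have bd: "\<And>k. bdd_above (varset N A k \<phi>)" using V unfolding Vsp_def by simp
  show C0: "C \<ge> 0" unfolding C_def using ne by (rule Inf_Bconsts_ge0)
  have varC: "var N A k \<phi> \<le> C * w k" for k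
  proof -
    have "var N A k \<phi> / w k \<le> C" unfolding C_def
    proof (rule cInf_greatest[OF ne])
      fix c assume "c \<in> Bconsts N A (\<lambda>m. D * r ^ m) \<phi>"
      then have "var N A k \<phi> \<le> c * w k" unfolding Bconsts_def by (simp add: theta_w'')
      then show "var N A k \<phi> / w k \<le> c" using w_pos[of k] by (simp add: divide_simps)
    qed
    then show ?thesis using w_pos[of k] by (simp add: divide_simps)
  qed
  obtain \<omega>0 where w0: "\<omega>0 \<in> Sig N A" using Sne by blast
  have bds: "bdd_above {cmod (\<phi> \<omega>) |\<omega>. \<omega> \<in> Sig N A}"
  proof (rule bdd_aboveI[of _ "cmod (\<phi> \<omega>0) + var N A 0 \<phi>"])
    fix x assume "x \<in> {cmod (\<phi> \<omega>) |\<omega>. \<omega> \<in> Sig N A}"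
    then obtain \<omega> where x: "x = cmod (\<phi> \<omega>)" "\<omega> \<in> Sig N A" by blast
    have "cmod (\<phi> \<omega> - \<phi> \<omega>0) \<le> var N A 0 \<phi>" using var_pt[OF bd x(2) w0] by simp
    moreover have "cmod (\<phi> \<omega>) \<le> cmod (\<phi> \<omega>0) + cmod (\<phi> \<omega> - \<phi> \<omega>0)" by (rule norm_triangle_sub)
    ultimately show "x \<le> cmod (\<phi> \<omega>0) + var N A 0 \<phi>" using x by simp
  qed
  show pf: "prof N A \<phi> (supnorm N A \<phi>) (\<lambda>k. C * w k)" unfolding prof_def
  proof (intro conjI ballI allI impI)
    fix \<omega> assume "\<omega> \<in> Sig N A"
    then have "cmod (\<phi> \<omega>) \<in> {cmod (\<phi> \<omega>) |\<omega>. \<omega> \<in> Sig N A}" by blast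
    then show "cmod (\<phi> \<omega>) \<le> supnorm N A \<phi>" unfolding supnorm_def using bds by (rule cSup_upper)
  next
    fix j \<omega> \<omega>' assume "\<omega> \<in> Sig N A" "\<omega>' \<in> Sig N A" "\<forall>i<j. \<omega> i = \<omega>' i"
    then have "cmod (\<phi> \<omega> - \<phi> \<omega>') \<le> var N A j \<phi>" by (intro var_pt[OF bd])
    then show "cmod (\<phi> \<omega> - \<phi> \<omega>') \<le> C * w j" using varC[of j] by simp
  qed
  show "supnorm N A \<phi> \<ge> 0" using prof_supnorm(2)[OF pf] .
  show "Bnorm N A (\<lambda>m. D * r ^ m) \<phi> = supnorm N A \<phi> + C" unfolding Bnorm_def C_def by simp
qed

lemma Bsp_Bnorm_ge0: "\<phi> \<in> Bsp N A (\<lambda>m. D * r ^ m) \<Longrightarrow> Bnorm N A (\<lambda>m. D * r ^ m) \<phi> \<ge> 0"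
  using Bsp_prof[of \<phi>] by simp

end



definition pre :: "nat \<Rightarrow> seq \<Rightarrow> nat list" where "pre m \<omega> = map \<omega> [0..<m]"

definition repw :: "nat \<Rightarrow> (nat \<Rightarrow> nat \<Rightarrow> nat) \<Rightarrow> nat list \<Rightarrow> seq" where
  "repw N A u = (SOME \<omega>'. \<omega>' \<in> Sig N A \<and> pre (length u) \<omega>' = u)"

definition Pm :: "nat \<Rightarrow> (nat \<Rightarrow> nat \<Rightarrow> nat) \<Rightarrow> nat \<Rightarrow> cfun \<Rightarrow> cfun" where
  "Pm N A m \<phi> \<omega> = (if \<omega> \<in> Sig N A then \<phi> (repw N A (pre m \<omega>)) else 0)"

definition ind :: "nat \<Rightarrow> (nat \<Rightarrow> nat \<Rightarrow> nat) \<Rightarrow> nat list \<Rightarrow> cfun" where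
  "ind N A u \<omega> = (if \<omega> \<in> Sig N A \<and> pre (length u) \<omega> = u then 1 else 0)"

lemma length_pre[simp]: "length (pre m \<omega>) = m" by (simp add: pre_def)

lemma pre_eq: "pre m \<omega> = pre m \<omega>' \<longleftrightarrow> (\<forall>i<m. \<omega> i = \<omega>' i)"
  unfolding pre_def by (auto simp: list_eq_iff_nth_eq)

lemma repw_props:
  assumes "\<omega> \<in> Sig N A"
  shows "repw N A (pre m \<omega>) \<in> Sig N A" "\<forall>i<m. repw N A (pre m \<omega>) i = \<omega> i"
proof -
  have "\<exists>\<omega>'. \<omega>' \<in> Sig N A \<and> pre (length (pre m \<omega>)) \<omega>' = pre m \<omega>" using assms by auto
  then have "repw N A (pre m \<omega>) \<in> Sig N A \<and> pre (length (pre m \<omega>)) (repw N A (pre m \<omega>)) = pre m \<omega>"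
    unfolding repw_def by (rule someI_ex)
  then show "repw N A (pre m \<omega>) \<in> Sig N A" "\<forall>i<m. repw N A (pre m \<omega>) i = \<omega> i"
    by (auto simp: pre_eq)
qed

lemma pre_words: "\<omega> \<in> Sig N A \<Longrightarrow> pre m \<omega> \<in> words N A m"
  unfolding words_def Sig_def pre_def by auto

lemma finite_words: "finite (words N A m)"
proof (rule finite_subset)
  show "words N A m \<subseteq> {xs. set xs \<subseteq> {..<N} \<and> length xs = m}"
    unfolding words_def by (auto simp: in_set_conv_nth)
  show "finite {xs. set xs \<subseteq> {..<N} \<and> length xs = m}" by (rule finite_lists_length_eq) simp
qed

lemma Pm_sum:
  assumes "bij_betw e {..<card (words N A m)} (words N A m)"
  shows "Pm N A m \<phi> = (\<lambda>\<omega>. \<Sum>i<card (words N A m). \<phi> (repw N A (e i)) * ind N A (e i) \<omega>)"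
proof (rule ext)
  fix \<omega>
  let ?W = "words N A m"
  have "(\<Sum>i<card ?W. \<phi> (repw N A (e i)) * ind N A (e i) \<omega>) = (\<Sum>u\<in>?W. \<phi> (repw N A u) * ind N A u \<omega>)"
    using sum.reindex_bij_betw[OF assms, of "\<lambda>u. \<phi> (repw N A u) * ind N A u \<omega>"] by simp
  also have "\<dots> = Pm N A m \<phi> \<omega>"
  proof (cases "\<omega> \<in> Sig N A")
    case True
    have "(\<Sum>u\<in>?W. \<phi> (repw N A u) * ind N A u \<omega>) = (\<Sum>u\<in>?W. if pre m \<omega> = u then \<phi> (repw N A u) else 0)"
    proof (rule sum.cong[OF refl])
      fix u assume "u \<in> ?W"
      then have "length u = m" unfolding words_def by simp
      then show "\<phi> (repw N A u) * ind N A u \<omega> = (if pre m \<omega> = u then \<phi> (repw N A u) else 0)"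
        using True unfolding ind_def by auto
    qed
    also have "\<dots> = \<phi> (repw N A (pre m \<omega>))"
      using pre_words[OF True] finite_words by (simp add: sum.delta)
    finally show ?thesis using True by (simp add: Pm_def)
  next
    case False
    then show ?thesis by (simp add: Pm_def ind_def)
  qed
  finally show "Pm N A m \<phi> \<omega> = (\<Sum>i<card ?W. \<phi> (repw N A (e i)) * ind N A (e i) \<omega>)" by simp
qed

lemma Pm_add: "Pm N A m (\<lambda>\<omega>. \<phi> \<omega> + \<psi> \<omega>) = (\<lambda>\<omega>. Pm N A m \<phi> \<omega> + Pm N A m \<psi> \<omega>)"
  by (auto simp: Pm_def fun_eq_iff)

lemma Pm_scale: "Pm N A m (\<lambda>\<omega>. c * \<phi> \<omega>) = (\<lambda>\<omega>. c * Pm N A m \<phi> \<omega>)"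
  by (auto simp: Pm_def fun_eq_iff)

lemma Lpow_add: "(Lop N A g ^^ q) (\<lambda>\<omega>. f \<omega> + h \<omega>) = (\<lambda>\<omega>. (Lop N A g ^^ q) f \<omega> + (Lop N A g ^^ q) h \<omega>)"
  using Lpow_lin[where c=1 and d=1 and f=f and h=h and q=q and g=g] by simp

lemma Lpow_scale: "(Lop N A g ^^ q) (\<lambda>\<omega>. c * f \<omega>) = (\<lambda>\<omega>. c * (Lop N A g ^^ q) f \<omega>)"
  using Lpow_lin[where c=c and d=0 and f=f and h=f and q=q and g=g] by simp

lemma Lpow_diff: "(Lop N A g ^^ q) (\<lambda>\<omega>. f \<omega> - h \<omega>) = (\<lambda>\<omega>. (Lop N A g ^^ q) f \<omega> - (Lop N A g ^^ q) h \<omega>)"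
  using Lpow_lin[where c=1 and d="-1" and f=f and h=h and q=q and g=g] by simp

context setting
begin

abbreviation "\<Theta> \<equiv> (\<lambda>m. D * r ^ m)"

lemma Pm_prof:
  assumes "prof N A \<phi> \<sigma> (\<lambda>k. C * w k)"
  shows "prof N A (Pm N A m \<phi>) \<sigma> (\<lambda>k. C * w k)"
  unfolding prof_def
proof (intro conjI ballI allI impI)
  fix \<omega> assume w: "\<omega> \<in> Sig N A"
  show "cmod (Pm N A m \<phi> \<omega>) \<le> \<sigma>" using w profD1[OF assms repw_props(1)[OF w]] by (simp add: Pm_def)
next
  fix j \<omega> \<omega>' assume w: "\<omega> \<in> Sig N A" and w': "\<omega>' \<in> Sig N A" and ag: "\<forall>i<j. \<omega> i = \<omega>' i"
  show "cmod (Pm N A m \<phi> \<omega> - Pm N A m \<phi> \<omega>') \<le> C * w j"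
  proof (cases "j \<ge> m")
    case True
    then have "pre m \<omega> = pre m \<omega>'" using ag by (simp add: pre_eq)
    then have "Pm N A m \<phi> \<omega> = Pm N A m \<phi> \<omega>'" using w w' by (simp add: Pm_def)
    then show ?thesis using prof_nonneg(2)[OF assms, of j] by simp
  next
    case False
    have "\<forall>i<j. repw N A (pre m \<omega>) i = repw N A (pre m \<omega>') i"
      using repw_props(2)[OF w, of m] repw_props(2)[OF w', of m] ag False by auto
    then show ?thesis using w w' profD2[OF assms repw_props(1)[OF w] repw_props(1)[OF w']]
      by (simp add: Pm_def)
  qed
qed

lemma resid_prof:
  assumes "prof N A \<phi> \<sigma> (\<lambda>k. C * w k)"
  shows "prof N A (\<lambda>\<omega>. \<phi> \<omega> - Pm N A m \<phi> \<omega>) (C * w m) (\<lambda>j. 2 * C * w (max j m))"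
proof -
  have C0: "C \<ge> 0" using prof_nonneg(2)[OF assms, of 0] w_pos[of 0] by (simp add: zero_le_mult_iff)
  have sup: "cmod (\<phi> \<omega> - Pm N A m \<phi> \<omega>) \<le> C * w m" if w: "\<omega> \<in> Sig N A" for \<omega>
  proof -
    have "\<forall>i<m. \<omega> i = repw N A (pre m \<omega>) i" using repw_props(2)[OF w] by simp
    then show ?thesis using w profD2[OF assms w repw_props(1)[OF w]] by (simp add: Pm_def)
  qed
  show ?thesis unfolding prof_def
  proof (intro conjI ballI allI impI)
    fix \<omega> assume "\<omega> \<in> Sig N A" then show "cmod (\<phi> \<omega> - Pm N A m \<phi> \<omega>) \<le> C * w m" by (rule sup)
  next
    fix j \<omega> \<omega>' assume w: "\<omega> \<in> Sig N A" and w': "\<omega>' \<in> Sig N A" and ag: "\<forall>i<j. \<omega> i = \<omega>' i"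
    show "cmod (\<phi> \<omega> - Pm N A m \<phi> \<omega> - (\<phi> \<omega>' - Pm N A m \<phi> \<omega>')) \<le> 2 * C * w (max j m)"
    proof (cases "j \<ge> m")
      case True
      then have "pre m \<omega> = pre m \<omega>'" using ag by (simp add: pre_eq)
      then have "Pm N A m \<phi> \<omega> = Pm N A m \<phi> \<omega>'" using w w' by (simp add: Pm_def)
      then have "cmod (\<phi> \<omega> - Pm N A m \<phi> \<omega> - (\<phi> \<omega>' - Pm N A m \<phi> \<omega>')) = cmod (\<phi> \<omega> - \<phi> \<omega>')" by simp
      also have "\<dots> \<le> C * w j" by (rule profD2[OF assms w w' ag])
      also have "\<dots> \<le> 2 * C * w (max j m)" using True C0 w_pos[of j] by simp
      finally show ?thesis .
    next
      case False
      have "cmod (\<phi> \<omega> - Pm N A m \<phi> \<omega> - (\<phi> \<omega>' - Pm N A m \<phi> \<omega>')) \<le> cmod (\<phi> \<omega> - Pm N A m \<phi> \<omega>) + cmod (\<phi> \<omega>' - Pm N A m \<phi> \<omega>')"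
        by (rule norm_triangle_ineq4)
      also have "\<dots> \<le> C * w m + C * w m" using sup[OF w] sup[OF w'] by (rule add_mono)
      finally show ?thesis using False by simp
    qed
  qed
qed

lemma zero_Bsp: "(\<lambda>\<omega>. 0) \<in> Bsp N A \<Theta>" "Bnorm N A \<Theta> (\<lambda>\<omega>. 0) \<le> 0"
proof -
  have pf: "prof N A (\<lambda>\<omega>. 0) 0 (\<lambda>k. 0 * w k)" unfolding prof_def by simp
  show "(\<lambda>\<omega>. 0) \<in> Bsp N A \<Theta>" by (rule prof_Bsp[OF pf]) auto
  show "Bnorm N A \<Theta> (\<lambda>\<omega>. 0) \<le> 0" using prof_Bnorm[OF pf] by simp
qed

lemma prof_Bnorm_ge0:
  assumes "prof N A f s (\<lambda>k. Z * w k)" "Z \<ge> 0"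
  shows "Bnorm N A \<Theta> f \<ge> 0"
proof -
  have "Bconsts N A \<Theta> f \<noteq> {}" using prof_Bconsts[OF assms] by blast
  then have "Inf (Bconsts N A \<Theta> f) \<ge> 0" by (rule Inf_Bconsts_ge0)
  then show ?thesis unfolding Bnorm_def using prof_supnorm(2)[OF assms(1)] by simp
qed

end



context setting
begin

lemma T_prof:
  assumes g: "g \<in> Vsp N A" "condH N A \<Theta> b1 b2 g" "b1 > 0" "b2 > 0"
    and pf: "prof N A f \<sigma> (\<lambda>k. C * w k)" and C: "C \<ge> 0"
  shows "prof N A ((Lop N A g ^^ q) f) (M b1 b2 ^ q * \<sigma>) (\<lambda>j. (M b1 b2 ^ q * (C + 2 * real q * \<sigma>)) * w j)"
  using iterA[OF g pf C, of q] by simp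

lemma T_vanish:
  assumes "\<phi> \<in> Bsp N A \<Theta>" "\<omega> \<notin> Sig N A"
  shows "(Lop N A g ^^ q) \<phi> \<omega> = 0"
proof (cases q)
  case 0
  then show ?thesis using assms unfolding Bsp_def by auto
next
  case (Suc k)
  then show ?thesis using Lpow_out[of q \<omega>] assms(2) by simp
qed

lemma T_Bsp:
  assumes g: "g \<in> Vsp N A" "condH N A \<Theta> b1 b2 g" "b1 > 0" "b2 > 0"
    and phi: "\<phi> \<in> Bsp N A \<Theta>"
  shows "(Lop N A g ^^ q) \<phi> \<in> Bsp N A \<Theta>"
proof -
  note B = Bsp_prof[OF phi]
  have Mp: "M b1 b2 > 0" using M_facts[OF g(3,4)] by simp
  show ?thesis
  proof (rule prof_Bsp[OF T_prof[OF g B(1) B(2)]])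
    show "0 \<le> M b1 b2 ^ q * (Inf (Bconsts N A \<Theta> \<phi>) + 2 * real q * supnorm N A \<phi>)"
      using Mp B(2,3) by simp
    show "\<And>\<omega>. \<omega> \<notin> Sig N A \<Longrightarrow> (Lop N A g ^^ q) \<phi> \<omega> = 0" using T_vanish[OF phi] by blast
  qed
qed

lemma Pm_Bsp:
  assumes phi: "\<phi> \<in> Bsp N A \<Theta>"
  shows "Pm N A m \<phi> \<in> Bsp N A \<Theta>"
  using prof_Bsp[OF Pm_prof[OF Bsp_prof(1)[OF phi]] Bsp_prof(2)[OF phi]] by (simp add: Pm_def)

definition Sop :: "cfun \<Rightarrow> nat \<Rightarrow> nat \<Rightarrow> cfun \<Rightarrow> cfun" where
  "Sop g q m \<phi> = (Lop N A g ^^ q) (Pm N A m \<phi>)"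

lemma S_bounded:
  assumes g: "g \<in> Vsp N A" "condH N A \<Theta> b1 b2 g" "b1 > 0" "b2 > 0"
  shows "bounded_op N A \<Theta> (Sop g q m)"
  unfolding bounded_op_def
proof (intro conjI ballI allI)
  fix \<phi> assume "\<phi> \<in> Bsp N A \<Theta>"
  then show "Sop g q m \<phi> \<in> Bsp N A \<Theta>" unfolding Sop_def by (intro T_Bsp[OF g] Pm_Bsp)
next
  fix \<phi> \<psi> show "Sop g q m (\<lambda>\<omega>. \<phi> \<omega> + \<psi> \<omega>) = (\<lambda>\<omega>. Sop g q m \<phi> \<omega> + Sop g q m \<psi> \<omega>)"
    unfolding Sop_def Pm_add Lpow_add ..
next
  fix c \<phi> show "Sop g q m (\<lambda>\<omega>. c * \<phi> \<omega>) = (\<lambda>\<omega>. c * Sop g q m \<phi> \<omega>)"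
    unfolding Sop_def Pm_scale Lpow_scale ..
next
  let ?K = "M b1 b2 ^ q * (2 * real q + 2)"
  show "\<exists>K. \<forall>\<phi>\<in>Bsp N A \<Theta>. Bnorm N A \<Theta> (Sop g q m \<phi>) \<le> K * Bnorm N A \<Theta> \<phi>"
  proof (intro exI ballI)
    fix \<phi> assume phi: "\<phi> \<in> Bsp N A \<Theta>"
    note B = Bsp_prof[OF phi]
    let ?\<sigma> = "supnorm N A \<phi>" and ?C = "Inf (Bconsts N A \<Theta> \<phi>)"
    have Mp: "M b1 b2 > 0" using M_facts[OF g(3,4)] by simp
    have pf: "prof N A (Sop g q m \<phi>) (M b1 b2 ^ q * ?\<sigma>) (\<lambda>j. (M b1 b2 ^ q * (?C + 2 * real q * ?\<sigma>)) * w j)"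
      unfolding Sop_def by (rule T_prof[OF g Pm_prof[OF B(1)] B(2)])
    have "Bnorm N A \<Theta> (Sop g q m \<phi>) \<le> M b1 b2 ^ q * ?\<sigma> + M b1 b2 ^ q * (?C + 2 * real q * ?\<sigma>)"
      by (rule prof_Bnorm[OF pf]) (use Mp B in simp)
    also have "\<dots> = M b1 b2 ^ q * ((2 * real q + 1) * ?\<sigma> + ?C)" by (simp add: algebra_simps)
    also have "\<dots> \<le> M b1 b2 ^ q * ((2 * real q + 2) * (?\<sigma> + ?C))"
      using Mp B(2,3) by (intro mult_left_mono) (auto simp: algebra_simps)
    also have "\<dots> = ?K * Bnorm N A \<Theta> \<phi>" using B(4) by (simp add: mult_ac)
    finally show "Bnorm N A \<Theta> (Sop g q m \<phi>) \<le> ?K * Bnorm N A \<Theta> \<phi>" .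
  qed
qed

lemma S_rank:
  assumes "card (words N A m) < n"
  shows "rank_lt N A \<Theta> (Sop g q m) n"
proof -
  obtain e where e: "bij_betw e {0..<card (words N A m)} (words N A m)"
    using ex_bij_betw_nat_finite[OF finite_words] by blast
  then have e': "bij_betw e {..<card (words N A m)} (words N A m)" by (simp add: atLeast0LessThan)
  show ?thesis unfolding rank_lt_def
  proof (intro exI conjI ballI)
    show "card (words N A m) < n" by fact
    fix \<phi> :: cfun
    show "Sop g q m \<phi> = (\<lambda>\<omega>. \<Sum>i<card (words N A m). \<phi> (repw N A (e i)) * (\<lambda>i. (Lop N A g ^^ q) (ind N A (e i))) i \<omega>)"
      unfolding Sop_def Pm_sum[OF e'] Lpow_sum by simp
  qed
qed

lemma resid_bound:
  assumes g: "g \<in> Vsp N A" "condH N A \<Theta> b1 b2 g" "b1 > 0" "b2 > 0"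
    and phi: "\<phi> \<in> Bsp N A \<Theta>" "Bnorm N A \<Theta> \<phi> \<le> 1"
  shows "Bnorm N A \<Theta> (\<lambda>\<omega>. (Lop N A g ^^ q) \<phi> \<omega> - Sop g q m \<phi> \<omega>)
     \<le> M b1 b2 ^ q * (2 * P * Dp ^ q * r ^ (2 * q * (m - q)) + (2 * real q + 1) * w m)"
proof -
  note B = Bsp_prof[OF phi(1)]
  let ?C = "Inf (Bconsts N A \<Theta> \<phi>)"
  let ?Mq = "M b1 b2 ^ q"
  let ?R = "P * Dp ^ q * r ^ (2 * q * (m - q))"
  have Mp: "M b1 b2 > 0" using M_facts[OF g(3,4)] by simp
  have C1: "?C \<le> 1" using B(3,4) phi(2) by simp
  have R0: "?R \<ge> 0" using P_ge1 Dp_ge1 r0 by simp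
  have eq: "(\<lambda>\<omega>. (Lop N A g ^^ q) \<phi> \<omega> - Sop g q m \<phi> \<omega>) = (Lop N A g ^^ q) (\<lambda>\<omega>. \<phi> \<omega> - Pm N A m \<phi> \<omega>)"
    unfolding Sop_def Lpow_diff ..
  have pf: "prof N A ((Lop N A g ^^ q) (\<lambda>\<omega>. \<phi> \<omega> - Pm N A m \<phi> \<omega>)) (?Mq * ?C * w m)
     (\<lambda>j. ?Mq * ?C * (2 * w (max (j + q) m) + 2 * real q * w m * w j))"
    by (rule iterB[OF g resid_prof[OF B(1)] B(2)])
  let ?Z = "?Mq * ?C * (2 * ?R + 2 * real q * w m)"
  have pf2: "prof N A ((Lop N A g ^^ q) (\<lambda>\<omega>. \<phi> \<omega> - Pm N A m \<phi> \<omega>)) (?Mq * ?C * w m) (\<lambda>j. ?Z * w j)"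
  proof (rule prof_mono[OF pf order_refl])
    fix j
    have "w (max (j + q) m) \<le> ?R * w j" using w_Q[of j q m] by simp
    then have "2 * w (max (j + q) m) + 2 * real q * w m * w j \<le> (2 * ?R + 2 * real q * w m) * w j"
      by (simp add: algebra_simps)
    then show "?Mq * ?C * (2 * w (max (j + q) m) + 2 * real q * w m * w j) \<le> ?Z * w j"
      using Mp B(2) by (simp add: mult.assoc mult_left_mono)
  qed
  have Z0: "?Z \<ge> 0" using Mp B(2) R0 w_pos[of m] by simp
  have "Bnorm N A \<Theta> ((Lop N A g ^^ q) (\<lambda>\<omega>. \<phi> \<omega> - Pm N A m \<phi> \<omega>)) \<le> ?Mq * ?C * w m + ?Z"
    by (rule prof_Bnorm[OF pf2 Z0])
  also have "\<dots> = ?Mq * ?C * (2 * ?R + (2 * real q + 1) * w m)" by (simp add: algebra_simps)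
  also have "\<dots> \<le> ?Mq * 1 * (2 * ?R + (2 * real q + 1) * w m)"
    using Mp C1 R0 w_pos[of m] by (intro mult_right_mono mult_left_mono) auto
  finally show ?thesis unfolding eq by (simp add: mult_ac)
qed

lemma diff_bound_any:
  assumes g: "g \<in> Vsp N A" "condH N A \<Theta> b1 b2 g" "b1 > 0" "b2 > 0"
    and S: "bounded_op N A \<Theta> S"
  shows "\<exists>Bd. \<forall>\<phi>\<in>Bsp N A \<Theta>. Bnorm N A \<Theta> \<phi> \<le> 1 \<longrightarrow>
      (\<exists>s Z. prof N A (\<lambda>\<omega>. (Lop N A g ^^ q) \<phi> \<omega> - S \<phi> \<omega>) s (\<lambda>k. Z * w k) \<and> Z \<ge> 0 \<and> s + Z \<le> Bd)"
proof -
  obtain K where K: "\<forall>\<phi>\<in>Bsp N A \<Theta>. Bnorm N A \<Theta> (S \<phi>) \<le> K * Bnorm N A \<Theta> \<phi>"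
    using S unfolding bounded_op_def by blast
  have SB: "\<forall>\<phi>\<in>Bsp N A \<Theta>. S \<phi> \<in> Bsp N A \<Theta>" using S unfolding bounded_op_def by blast
  have Mp: "M b1 b2 > 0" using M_facts[OF g(3,4)] by simp
  let ?Mq = "M b1 b2 ^ q"
  show ?thesis
  proof (rule exI[of _ "M b1 b2 ^ q * (2 + 2 * real q) + max K 0"], intro ballI impI)
    fix \<phi> assume phi: "\<phi> \<in> Bsp N A \<Theta>" and n1: "Bnorm N A \<Theta> \<phi> \<le> 1"
    note B = Bsp_prof[OF phi]
    have Sphi: "S \<phi> \<in> Bsp N A \<Theta>" using SB phi by blast
    note B' = Bsp_prof[OF Sphi]
    let ?\<sigma> = "supnorm N A \<phi>" and ?C = "Inf (Bconsts N A \<Theta> \<phi>)"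
    let ?\<sigma>' = "supnorm N A (S \<phi>)" and ?C' = "Inf (Bconsts N A \<Theta> (S \<phi>))"
    have p1: "prof N A ((Lop N A g ^^ q) \<phi>) (?Mq * ?\<sigma>) (\<lambda>j. (?Mq * (?C + 2 * real q * ?\<sigma>)) * w j)"
      by (rule T_prof[OF g B(1) B(2)])
    have pd: "prof N A (\<lambda>\<omega>. (Lop N A g ^^ q) \<phi> \<omega> - S \<phi> \<omega>) (?Mq * ?\<sigma> + ?\<sigma>')
       (\<lambda>k. (?Mq * (?C + 2 * real q * ?\<sigma>) + ?C') * w k)"
      using prof_diff[OF p1 B'(1)] by (simp add: distrib_right)
    have s1: "?\<sigma> \<le> 1" "?C \<le> 1" using B(2,3,4) n1 by auto
    have "?\<sigma>' + ?C' \<le> K * Bnorm N A \<Theta> \<phi>" using K phi B'(4) by metis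
    also have "\<dots> \<le> max K 0"
    proof (cases "K \<ge> 0")
      case True
      then have "K * Bnorm N A \<Theta> \<phi> \<le> K * 1" using n1 by (intro mult_left_mono) auto
      then show ?thesis by simp
    next
      case False
      then have "K * Bnorm N A \<Theta> \<phi> \<le> 0" using Bsp_Bnorm_ge0[OF phi] by (simp add: mult_nonpos_nonneg)
      then show ?thesis by simp
    qed
    finally have s2: "?\<sigma>' + ?C' \<le> max K 0" .
    have "?Mq * ?\<sigma> + ?\<sigma>' + (?Mq * (?C + 2 * real q * ?\<sigma>) + ?C') = ?Mq * (?\<sigma> + ?C + 2 * real q * ?\<sigma>) + (?\<sigma>' + ?C')"
      by (simp add: algebra_simps)
    also have "\<dots> \<le> ?Mq * (1 + 1 + 2 * real q * 1) + max K 0"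
      using s1 s2 Mp B(2,3) by (intro add_mono mult_left_mono) (auto intro!: mult_left_mono)
    finally have "?Mq * ?\<sigma> + ?\<sigma>' + (?Mq * (?C + 2 * real q * ?\<sigma>) + ?C') \<le> ?Mq * (2 + 2 * real q) + max K 0" by simp
    moreover have "?Mq * (?C + 2 * real q * ?\<sigma>) + ?C' \<ge> 0" using Mp B(2,3) B'(2) by simp
    ultimately show "\<exists>s Z. prof N A (\<lambda>\<omega>. (Lop N A g ^^ q) \<phi> \<omega> - S \<phi> \<omega>) s (\<lambda>k. Z * w k) \<and> Z \<ge> 0 \<and> s + Z \<le> ?Mq * (2 + 2 * real q) + max K 0"
      using pd by blast
  qed
qed

lemma opnorm_ge0:
  assumes g: "g \<in> Vsp N A" "condH N A \<Theta> b1 b2 g" "b1 > 0" "b2 > 0"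
    and S: "bounded_op N A \<Theta> S"
  shows "opnorm N A \<Theta> (\<lambda>\<phi> \<omega>. (Lop N A g ^^ q) \<phi> \<omega> - S \<phi> \<omega>) \<ge> 0"
proof -
  obtain Bd where Bd: "\<forall>\<phi>\<in>Bsp N A \<Theta>. Bnorm N A \<Theta> \<phi> \<le> 1 \<longrightarrow>
      (\<exists>s Z. prof N A (\<lambda>\<omega>. (Lop N A g ^^ q) \<phi> \<omega> - S \<phi> \<omega>) s (\<lambda>k. Z * w k) \<and> Z \<ge> 0 \<and> s + Z \<le> Bd)"
    using diff_bound_any[OF g S] by blast
  let ?Y = "{Bnorm N A \<Theta> ((\<lambda>\<phi> \<omega>. (Lop N A g ^^ q) \<phi> \<omega> - S \<phi> \<omega>) \<phi>) |\<phi>. \<phi> \<in> Bsp N A \<Theta> \<and> Bnorm N A \<Theta> \<phi> \<le> 1}"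
  have bd: "bdd_above ?Y"
  proof (rule bdd_aboveI[of _ Bd])
    fix x assume "x \<in> ?Y"
    then obtain \<phi> where x: "x = Bnorm N A \<Theta> (\<lambda>\<omega>. (Lop N A g ^^ q) \<phi> \<omega> - S \<phi> \<omega>)" "\<phi> \<in> Bsp N A \<Theta>" "Bnorm N A \<Theta> \<phi> \<le> 1"
      by auto
    then obtain s Z where "prof N A (\<lambda>\<omega>. (Lop N A g ^^ q) \<phi> \<omega> - S \<phi> \<omega>) s (\<lambda>k. Z * w k)" "Z \<ge> 0" "s + Z \<le> Bd"
      using Bd by blast
    then show "x \<le> Bd" using prof_Bnorm x(1) by fastforce
  qed
  have z: "(\<lambda>\<omega>. 0) \<in> Bsp N A \<Theta>" "Bnorm N A \<Theta> (\<lambda>\<omega>. 0) \<le> 1" using zero_Bsp by auto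
  then obtain s Z where sz: "prof N A (\<lambda>\<omega>. (Lop N A g ^^ q) (\<lambda>\<omega>. 0) \<omega> - S (\<lambda>\<omega>. 0) \<omega>) s (\<lambda>k. Z * w k)" "Z \<ge> 0"
    using Bd by blast
  have mem: "Bnorm N A \<Theta> (\<lambda>\<omega>. (Lop N A g ^^ q) (\<lambda>\<omega>. 0) \<omega> - S (\<lambda>\<omega>. 0) \<omega>) \<in> ?Y" using z by blast
  have "0 \<le> Bnorm N A \<Theta> (\<lambda>\<omega>. (Lop N A g ^^ q) (\<lambda>\<omega>. 0) \<omega> - S (\<lambda>\<omega>. 0) \<omega>)" by (rule prof_Bnorm_ge0[OF sz])
  also have "\<dots> \<le> Sup ?Y" using mem bd by (rule cSup_upper)
  finally show ?thesis unfolding opnorm_def .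
qed

lemma approx_bound:
  assumes g: "g \<in> Vsp N A" "condH N A \<Theta> b1 b2 g" "b1 > 0" "b2 > 0"
    and card: "card (words N A m) < n"
  shows "approx_num N A \<Theta> n (Lop N A g ^^ q)
     \<le> M b1 b2 ^ q * (2 * P * Dp ^ q * r ^ (2 * q * (m - q)) + (2 * real q + 1) * w m)"
proof -
  let ?T = "Lop N A g ^^ q"
  let ?X = "{opnorm N A \<Theta> (\<lambda>\<phi> \<omega>. ?T \<phi> \<omega> - S \<phi> \<omega>) |S. bounded_op N A \<Theta> S \<and> rank_lt N A \<Theta> S n}"
  let ?B = "M b1 b2 ^ q * (2 * P * Dp ^ q * r ^ (2 * q * (m - q)) + (2 * real q + 1) * w m)"
  have mem: "opnorm N A \<Theta> (\<lambda>\<phi> \<omega>. ?T \<phi> \<omega> - Sop g q m \<phi> \<omega>) \<in> ?X"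
    using S_bounded[OF g] S_rank[OF card] by blast
  have bb: "bdd_below ?X"
    by (rule bdd_belowI[of _ 0]) (use opnorm_ge0[OF g] in blast)
  have "approx_num N A \<Theta> n ?T \<le> opnorm N A \<Theta> (\<lambda>\<phi> \<omega>. ?T \<phi> \<omega> - Sop g q m \<phi> \<omega>)"
    unfolding approx_num_def using mem bb by (rule cInf_lower)
  also have "\<dots> \<le> ?B" unfolding opnorm_def
  proof (rule cSup_least)
    show "{Bnorm N A \<Theta> ((\<lambda>\<phi> \<omega>. ?T \<phi> \<omega> - Sop g q m \<phi> \<omega>) \<phi>) |\<phi>. \<phi> \<in> Bsp N A \<Theta> \<and> Bnorm N A \<Theta> \<phi> \<le> 1} \<noteq> {}"
      using zero_Bsp by fastforce
    fix x assume "x \<in> {Bnorm N A \<Theta> ((\<lambda>\<phi> \<omega>. ?T \<phi> \<omega> - Sop g q m \<phi> \<omega>) \<phi>) |\<phi>. \<phi> \<in> Bsp N A \<Theta> \<and> Bnorm N A \<Theta> \<phi> \<le> 1}"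
    then obtain \<phi> where "x = Bnorm N A \<Theta> (\<lambda>\<omega>. ?T \<phi> \<omega> - Sop g q m \<phi> \<omega>)" "\<phi> \<in> Bsp N A \<Theta>" "Bnorm N A \<Theta> \<phi> \<le> 1"
      by auto
    then show "x \<le> ?B" using resid_bound[OF g] by simp
  qed
  finally show ?thesis .
qed

end



lemma mpow_left:
  assumes "i < N" "j < N"
  shows "mpow N A (Suc m) i j = (\<Sum>k<N. A i k * mpow N A m k j)"
  using assms(2)
proof (induction m arbitrary: j)
  case 0
  have "(\<Sum>k<N. mpow N A 0 i k * A k j) = (\<Sum>k<N. if i = k then A k j else 0)"
    by (rule sum.cong) auto
  also have "\<dots> = A i j" using assms(1) by (simp add: sum.delta)
  finally have "(\<Sum>k<N. mpow N A 0 i k * A k j) = A i j" .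
  moreover have "(\<Sum>k<N. A i k * mpow N A 0 k j) = A i j" using 0 by (simp add: sum.delta' if_distrib cong: if_cong)
  ultimately show ?case by simp
next
  case (Suc m)
  have "mpow N A (Suc (Suc m)) i j = (\<Sum>k<N. mpow N A (Suc m) i k * A k j)" by simp
  also have "\<dots> = (\<Sum>k<N. (\<Sum>l<N. A i l * mpow N A m l k) * A k j)"
  proof (rule sum.cong[OF refl])
    fix k assume "k \<in> {..<N}"
    then have "mpow N A (Suc m) i k = (\<Sum>l<N. A i l * mpow N A m l k)" using Suc.IH[of k] by simp
    then show "mpow N A (Suc m) i k * A k j = (\<Sum>l<N. A i l * mpow N A m l k) * A k j" by (simp only:)
  qed
  also have "\<dots> = (\<Sum>k<N. \<Sum>l<N. A i l * mpow N A m l k * A k j)"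
    by (simp add: sum_distrib_right)
  also have "\<dots> = (\<Sum>l<N. \<Sum>k<N. A i l * mpow N A m l k * A k j)"
    by (rule sum.swap)
  also have "\<dots> = (\<Sum>l<N. A i l * (\<Sum>k<N. mpow N A m l k * A k j))"
    by (simp add: sum_distrib_left mult_ac)
  also have "\<dots> = (\<Sum>l<N. A i l * mpow N A (Suc m) l j)" by simp
  finally show ?case .
qed

lemma has_succ:
  assumes "zero_one_matrix N A" "aperiodic N A" "i < N"
  shows "\<exists>k. k < N \<and> A i k = 1"
proof -
  obtain M where M: "M > 0" "\<forall>i<N. \<forall>j<N. mpow N A M i j > 0" using assms(2) unfolding aperiodic_def by blast
  then obtain M' where M': "M = Suc M'" by (cases M) auto
  have "mpow N A (Suc M') i i > 0" using M(2) assms(3) M' by simp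
  then have "(\<Sum>k<N. A i k * mpow N A M' k i) > 0" using mpow_left[OF assms(3) assms(3), of A M'] by simp
  then obtain k where k: "k < N" "A i k * mpow N A M' k i \<noteq> 0"
    by (metis (no_types, lifting) less_numeral_extra(3) sum.neutral lessThan_iff)
  then have "A i k \<noteq> 0" by auto
  moreover have "A i k = 0 \<or> A i k = 1" using assms(1) assms(3) k(1) unfolding zero_one_matrix_def by auto
  ultimately have "A i k = 1" by auto
  then show ?thesis using k(1) by blast
qed

lemma Sig_nonempty:
  assumes "N \<ge> 1" "zero_one_matrix N A" "aperiodic N A"
  shows "Sig N A \<noteq> {}"
proof -
  define nx where "nx = (\<lambda>x. SOME k. k < N \<and> A x k = 1)"
  define \<omega> where "\<omega> = rec_nat 0 (\<lambda>n x. nx x)"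
  have lt: "\<omega> n < N" for n
  proof (induction n)
    case 0 then show ?case using assms(1) by (simp add: \<omega>_def)
  next
    case (Suc n)
    have "\<omega> (Suc n) = nx (\<omega> n)" by (simp add: \<omega>_def)
    then show ?case using someI_ex[OF has_succ[OF assms(2,3) Suc.IH]] by (simp add: nx_def)
  qed
  have tr: "A (\<omega> n) (\<omega> (Suc n)) = 1" for n
  proof -
    have "\<omega> (Suc n) = nx (\<omega> n)" by (simp add: \<omega>_def)
    then show ?thesis using someI_ex[OF has_succ[OF assms(2,3) lt[of n]]] by (simp add: nx_def)
  qed
  have "\<omega> \<in> Sig N A" unfolding Sig_def using lt tr by simp
  then show ?thesis by blast
qed

lemma words_take: "u \<in> words N A (m + n) \<Longrightarrow> take m u \<in> words N A m"
  unfolding words_def by auto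

lemma words_drop: "u \<in> words N A (m + n) \<Longrightarrow> drop m u \<in> words N A n"
  unfolding words_def by (auto simp: add.commute[of m] add.left_commute)

lemma card_words_submult: "card (words N A (m + n)) \<le> card (words N A m) * card (words N A n)"
proof -
  have "card (words N A (m + n)) \<le> card (words N A m \<times> words N A n)"
  proof (rule card_inj_on_le[where f="\<lambda>u. (take m u, drop m u)"])
    show "inj_on (\<lambda>u. (take m u, drop m u)) (words N A (m + n))"
      by (rule inj_onI) (metis append_take_drop_id prod.inject)
    show "(\<lambda>u. (take m u, drop m u)) ` words N A (m + n) \<subseteq> words N A m \<times> words N A n"
      using words_take words_drop by blast
    show "finite (words N A m \<times> words N A n)" using finite_words by simp
  qed
  then show ?thesis by (simp add: card_cartesian_product)
qed

context setting
begin

lemma card_words_pos: "card (words N A n) \<ge> 1"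
proof -
  obtain \<omega> where "\<omega> \<in> Sig N A" using Sne by blast
  then have "pre n \<omega> \<in> words N A n" by (rule pre_words)
  then have "words N A n \<noteq> {}" by blast
  then show ?thesis using finite_words by (simp add: Suc_le_eq card_gt_0_iff)
qed

definition aw :: "nat \<Rightarrow> real" where "aw n = ln (real (card (words N A n)))"

lemma aw_nonneg: "aw n \<ge> 0" using card_words_pos[of n] by (simp add: aw_def)

lemma aw_0: "aw 0 = 0"
proof -
  have "words N A 0 = {[]}" unfolding words_def by auto
  then show ?thesis by (simp add: aw_def)
qed

lemma aw_sub: "aw (m + n) \<le> aw m + aw n"
proof -
  have "real (card (words N A (m + n))) \<le> real (card (words N A m)) * real (card (words N A n))"
    using card_words_submult[of N A m n] by (metis of_nat_le_iff of_nat_mult)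
  then have "ln (real (card (words N A (m + n)))) \<le> ln (real (card (words N A m)) * real (card (words N A n)))"
    using card_words_pos[of "m+n"] by simp
  also have "\<dots> = aw m + aw n" unfolding aw_def using card_words_pos[of m] card_words_pos[of n] by (simp add: ln_mult)
  finally show ?thesis unfolding aw_def .
qed

lemma aw_mult: "aw (q * k + s) \<le> real q * aw k + aw s"
proof (induction q)
  case 0 then show ?case by simp
next
  case (Suc q)
  have "aw (Suc q * k + s) = aw (k + (q * k + s))" by (simp add: add.assoc)
  also have "\<dots> \<le> aw k + aw (q * k + s)" by (rule aw_sub)
  also have "\<dots> \<le> aw k + (real q * aw k + aw s)" using Suc.IH by simp
  finally show ?case by (simp add: algebra_simps)
qed

definition Lh :: real where "Lh = Inf ((\<lambda>n. aw n / real n) ` {1..})"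

lemma Lh_lower: "n \<ge> 1 \<Longrightarrow> Lh \<le> aw n / real n"
  unfolding Lh_def by (rule cInf_lower) (auto intro!: bdd_belowI[of _ 0] simp: aw_nonneg)

lemma Lh_nonneg: "Lh \<ge> 0"
  unfolding Lh_def by (rule cInf_greatest) (auto simp: aw_nonneg)

lemma fekete: "(\<lambda>n. aw n / real n) \<longlonglongrightarrow> Lh"
proof (rule LIMSEQ_I)
  fix \<epsilon> :: real assume e: "\<epsilon> > 0"
  have "\<exists>k\<in>{1..}. aw k / real k < Lh + \<epsilon> / 2"
  proof (rule ccontr)
    assume "\<not> ?thesis"
    then have "\<forall>k\<in>{1..}. Lh + \<epsilon> / 2 \<le> aw k / real k" by (simp add: not_less)
    then have "Lh + \<epsilon> / 2 \<le> Lh" unfolding Lh_def by (intro cInf_greatest) auto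
    then show False using e by simp
  qed
  then obtain k where k: "k \<ge> 1" "aw k / real k < Lh + \<epsilon> / 2" by auto
  define Bk where "Bk = (\<Sum>s<k. aw s)"
  have Bk: "aw s \<le> Bk" if "s < k" for s
    unfolding Bk_def using that aw_nonneg by (intro member_le_sum) auto
  have Bk0: "Bk \<ge> 0" unfolding Bk_def using aw_nonneg by (simp add: sum_nonneg)
  obtain n0 :: nat where n0: "real n0 > 2 * Bk / \<epsilon>" using reals_Archimedean2 by blast
  show "\<exists>no. \<forall>n\<ge>no. norm (aw n / real n - Lh) < \<epsilon>"
  proof (intro exI allI impI)
    fix n assume n: "n \<ge> max 1 n0"
    then have np: "real n > 0" by simp
    have low: "Lh \<le> aw n / real n" using n by (intro Lh_lower) simp
    have dec: "n = (n div k) * k + n mod k" by simp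
    have "aw n \<le> real (n div k) * aw k + aw (n mod k)"
      using aw_mult[of "n div k" k "n mod k"] dec by simp
    also have "\<dots> \<le> real n / real k * aw k + Bk"
    proof (intro add_mono mult_right_mono)
      have "real (n div k) * real k \<le> real n" by (metis of_nat_le_iff of_nat_mult div_times_less_eq_dividend)
      then show "real (n div k) \<le> real n / real k" using k(1) by (simp add: field_simps)
      show "aw (n mod k) \<le> Bk" using k(1) by (intro Bk) simp
    qed (rule aw_nonneg)
    finally have "aw n / real n \<le> (real n / real k * aw k + Bk) / real n" using np by (simp add: divide_right_mono)
    also have "\<dots> = aw k / real k + Bk / real n" using np by (simp add: field_simps)
    also have "Bk / real n < \<epsilon> / 2"
    proof -
      have "real n \<ge> real n0" using n by simp
      then have "real n > 2 * Bk / \<epsilon>" using n0 by simp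
      then have "2 * Bk < \<epsilon> * real n" using e by (simp add: field_simps)
      then show ?thesis using np by (simp add: field_simps)
    qed
    finally have "aw n / real n < Lh + \<epsilon>" using k(2) by simp
    then show "norm (aw n / real n - Lh) < \<epsilon>" using low e by simp
  qed
qed

lemma htop_eq: "htop N A = Lh"
proof -
  have "(\<lambda>n. ln (real (card (words N A n))) / real n) \<longlonglongrightarrow> Lh" using fekete by (simp add: aw_def)
  then show ?thesis unfolding htop_def by (rule limI)
qed

lemma words_growth:
  assumes "R' > exp (htop N A)"
  shows "\<exists>n3. \<forall>m\<ge>n3. real (card (words N A m)) < R' ^ m"
proof -
  have Rp: "R' > 0" using assms by (meson exp_gt_zero less_trans)
  have "Lh < ln R'" using assms htop_eq Rp by (metis exp_less_cancel_iff exp_ln)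
  then have "\<forall>\<^sub>F m in sequentially. aw m / real m < ln R'"
    using fekete order_tendstoD(2) by blast
  then obtain n0 where n0: "\<forall>m\<ge>n0. aw m / real m < ln R'" by (auto simp: eventually_sequentially)
  show ?thesis
  proof (intro exI allI impI)
    fix m assume m: "m \<ge> max 1 n0"
    then have "aw m / real m < ln R'" using n0 by simp
    then have "aw m < real m * ln R'" using m by (simp add: field_simps)
    then have "exp (aw m) < exp (real m * ln R')" by simp
    moreover have "exp (aw m) = real (card (words N A m))" unfolding aw_def using card_words_pos[of m] by simp
    moreover have "exp (real m * ln R') = R' ^ m" using Rp by (simp add: exp_of_nat_mult)
    ultimately show "real (card (words N A m)) < R' ^ m" by simp
  qed
qed

lemma htop_nonneg: "htop N A \<ge> 0" using htop_eq Lh_nonneg by simp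

end



context setting
begin

lemma zero_op: "bounded_op N A \<Theta> (\<lambda>\<phi> \<omega>. 0)" "n \<ge> 1 \<Longrightarrow> rank_lt N A \<Theta> (\<lambda>\<phi> \<omega>. 0) n"
proof -
  show "bounded_op N A \<Theta> (\<lambda>\<phi> \<omega>. 0)" unfolding bounded_op_def
  proof (intro conjI ballI allI)
    show "\<exists>K. \<forall>\<phi>\<in>Bsp N A \<Theta>. Bnorm N A \<Theta> (\<lambda>\<omega>. 0) \<le> K * Bnorm N A \<Theta> \<phi>"
      using zero_Bsp(2) by (intro exI[of _ 0]) simp
  qed (use zero_Bsp(1) in auto)
  show "n \<ge> 1 \<Longrightarrow> rank_lt N A \<Theta> (\<lambda>\<phi> \<omega>. 0) n" unfolding rank_lt_def
    by (intro exI[of _ 0]) auto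
qed

lemma approx_q0:
  assumes g: "g \<in> Vsp N A" "condH N A \<Theta> b1 b2 g" "b1 > 0" "b2 > 0" and n: "n \<ge> 1"
  shows "approx_num N A \<Theta> n (Lop N A g ^^ 0) \<le> 1"
proof -
  let ?T = "Lop N A g ^^ 0"
  let ?X = "{opnorm N A \<Theta> (\<lambda>\<phi> \<omega>. ?T \<phi> \<omega> - S \<phi> \<omega>) |S. bounded_op N A \<Theta> S \<and> rank_lt N A \<Theta> S n}"
  have mem: "opnorm N A \<Theta> (\<lambda>\<phi> \<omega>. ?T \<phi> \<omega> - (\<lambda>\<phi> \<omega>. 0) \<phi> \<omega>) \<in> ?X"
    unfolding mem_Collect_eq by (intro exI[of _ "\<lambda>\<phi> \<omega>. 0"]) (use zero_op n in auto)
  have bb: "bdd_below ?X"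
    by (rule bdd_belowI[of _ 0]) (use opnorm_ge0[OF g] in blast)
  have "approx_num N A \<Theta> n ?T \<le> opnorm N A \<Theta> (\<lambda>\<phi> \<omega>. ?T \<phi> \<omega> - (\<lambda>\<phi> \<omega>. 0) \<phi> \<omega>)"
    unfolding approx_num_def using mem bb by (rule cInf_lower)
  also have "\<dots> \<le> 1" unfolding opnorm_def
  proof (rule cSup_least)
    show "{Bnorm N A \<Theta> ((\<lambda>\<phi> \<omega>. ?T \<phi> \<omega> - (\<lambda>\<phi> \<omega>. 0) \<phi> \<omega>) \<phi>) |\<phi>. \<phi> \<in> Bsp N A \<Theta> \<and> Bnorm N A \<Theta> \<phi> \<le> 1} \<noteq> {}"
      using zero_Bsp by fastforce
  qed auto
  finally show ?thesis .
qed

lemma final_main: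
  assumes R: "R > exp (htop N A)"
  shows "\<exists>N1::nat. \<forall>n\<ge>N1. \<forall>b1 b2. b1 > 0 \<longrightarrow> b2 > 0 \<longrightarrow>
                 (\<forall>g\<in>Vsp N A. condH N A \<Theta> b1 b2 g \<longrightarrow>
                    approx_num N A \<Theta> n (Lop N A g ^^ q)
                      \<le> (M b1 b2 / r\<^sup>2) ^ q
                         * (real n - 1) powr (- 2 * real q * ln (1 / r) / ln R))"
proof (cases "q = 0")
  case True
  show ?thesis
  proof (intro exI[of _ 2] allI impI ballI)
    fix n :: nat and b1 b2 g assume n: "2 \<le> n" and b: "b1 > 0" "b2 > 0" and g: "g \<in> Vsp N A" "condH N A \<Theta> b1 b2 g"
    have "approx_num N A \<Theta> n (Lop N A g ^^ q) \<le> 1" using approx_q0[OF g b] n True by simp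
    moreover have "real n - 1 \<noteq> 0" using n by simp
    ultimately show "approx_num N A \<Theta> n (Lop N A g ^^ q) \<le> (M b1 b2 / r\<^sup>2) ^ q * (real n - 1) powr (- 2 * real q * ln (1 / r) / ln R)"
      using True by simp
  qed
next
  case False
  then have q1: "q \<ge> 1" by simp
  let ?h = "htop N A"
  define R' where "R' = (exp ?h + R) / 2"
  have R'1: "exp ?h < R'" "R' < R" using R by (auto simp: R'_def)
  have eh: "exp ?h \<ge> 1" using htop_nonneg by simp
  have R'g1: "R' > 1" using R'1 eh by linarith
  define lR' where "lR' = ln R'"
  define lR where "lR = ln R"
  have lR'0: "lR' > 0" using R'g1 by (simp add: lR'_def)
  have lRlR': "lR' < lR" unfolding lR'_def lR_def using R'1 R'g1 by simp
  have lR0: "lR > 0" using lR'0 lRlR' by simp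
  obtain n3 where n3: "\<forall>m\<ge>n3. real (card (words N A m)) < R' ^ m" using words_growth[OF R'1(1)] by blast
  define mthr where "mthr = max n3 (2 * q + k0)"
  define \<rho> where "\<rho> = ln (1 / r)"
  have \<rho>0: "\<rho> > 0" using r0 r1 by (simp add: \<rho>_def)
  have r_exp: "r = exp (- \<rho>)" using r0 by (simp add: \<rho>_def ln_div)
  define \<Gamma> where "\<Gamma> = 2 * P * Dp ^ q + 2 * real q + 1"
  have \<Gamma>0: "\<Gamma> > 0" using P_ge1 Dp_ge1 by (simp add: \<Gamma>_def add_pos_nonneg)
  define c where "c = 2 * real q * \<rho>"
  have c0: "c > 0" using q1 \<rho>0 by (simp add: c_def)
  define \<delta> where "\<delta> = 1 / lR' - 1 / lR"
  have \<delta>0: "\<delta> > 0" using lR'0 lRlR' by (simp add: \<delta>_def frac_less2)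
  define \<Lambda> where "\<Lambda> = max ((ln \<Gamma> + real q * c) / (c * \<delta>)) ((real mthr + 1) * lR')"
  define N1 where "N1 = nat \<lceil>exp \<Lambda>\<rceil> + 2"
  show ?thesis
  proof (intro exI[of _ N1] allI impI ballI)
    fix n :: nat and b1 b2 g assume n: "N1 \<le> n" and b: "b1 > 0" "b2 > 0" and g: "g \<in> Vsp N A" "condH N A \<Theta> b1 b2 g"
    define x where "x = real n - 1"
    have "real n \<ge> exp \<Lambda> + 2"
    proof -
      have "real N1 \<ge> exp \<Lambda> + 2" unfolding N1_def by linarith
      then show ?thesis using n by linarith
    qed
    then have xL: "x > exp \<Lambda>" unfolding x_def by linarith
    have x0: "x > 0" using xL exp_gt_zero[of \<Lambda>] by linarith
    define lam where "lam = ln x"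
    have lamL: "lam > \<Lambda>" using xL x0 unfolding lam_def by (metis ln_exp ln_less_cancel_iff exp_gt_zero)
    have lam1: "lam \<ge> (ln \<Gamma> + real q * c) / (c * \<delta>)" using lamL unfolding \<Lambda>_def by linarith
    have lam2: "lam \<ge> (real mthr + 1) * lR'" using lamL unfolding \<Lambda>_def by linarith
    define m where "m = nat \<lfloor>lam / lR'\<rfloor>"
    have ql: "lam / lR' \<ge> real mthr + 1" using lam2 lR'0 by (simp add: field_simps)
    have mfl: "real m = of_int \<lfloor>lam / lR'\<rfloor>" unfolding m_def using ql
      by (simp add: of_nat_nat)
    have m_le: "real m \<le> lam / lR'" using mfl by linarith
    have m_gt: "real m > lam / lR' - 1" using mfl by linarith
    have m_thr: "m \<ge> mthr" using m_gt ql by linarith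
    then have m_q: "m \<ge> q" and m_k: "m \<ge> 2 * q + k0" and m_n3: "m \<ge> n3" unfolding mthr_def by auto
    have card: "card (words N A m) < n"
    proof -
      have "real (card (words N A m)) < R' ^ m" using n3 m_n3 by blast
      also have "R' ^ m = exp (real m * lR')" using R'g1 by (simp add: lR'_def exp_of_nat_mult)
      also have "\<dots> \<le> exp lam" using m_le lR'0 by (simp add: field_simps)
      also have "\<dots> = x" using x0 by (simp add: lam_def)
      finally show ?thesis unfolding x_def by simp
    qed
    have Mp: "M b1 b2 > 0" using M_facts[OF b] by simp
    have "approx_num N A \<Theta> n (Lop N A g ^^ q)
        \<le> M b1 b2 ^ q * (2 * P * Dp ^ q * r ^ (2 * q * (m - q)) + (2 * real q + 1) * w m)"
      by (rule approx_bound[OF g b card])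
    also have "\<dots> \<le> M b1 b2 ^ q * (\<Gamma> * r ^ (2 * q * (m - q)))"
    proof (rule mult_left_mono)
      have "w m \<le> r ^ (2 * q * (m - q))" by (rule w_small[OF m_k])
      then have "(2 * real q + 1) * w m \<le> (2 * real q + 1) * r ^ (2 * q * (m - q))"
        by (intro mult_left_mono) auto
      then show "2 * P * Dp ^ q * r ^ (2 * q * (m - q)) + (2 * real q + 1) * w m \<le> \<Gamma> * r ^ (2 * q * (m - q))"
        by (simp add: \<Gamma>_def algebra_simps)
    qed (use Mp in simp)
    also have "\<dots> \<le> (M b1 b2 / r\<^sup>2) ^ q * x powr (- 2 * real q * ln (1 / r) / ln R)"
    proof -
      have e1: "r ^ (2 * q * (m - q)) = exp (- (c * (real m - real q)))"
      proof -
        have "r ^ (2 * q * (m - q)) = exp (real (2 * q * (m - q)) * (- \<rho>))"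
          by (subst r_exp) (simp add: exp_of_nat_mult[symmetric])
        also have "real (2 * q * (m - q)) = 2 * real q * (real m - real q)" using m_q by (simp add: of_nat_diff)
        finally show ?thesis by (simp add: c_def algebra_simps)
      qed
      have e2: "x powr (- 2 * real q * ln (1 / r) / ln R) = exp (- (c * lam / lR))"
        using x0 by (simp add: powr_def c_def \<rho>_def lam_def lR_def algebra_simps)
      have e3: "(M b1 b2 / r\<^sup>2) ^ q = M b1 b2 ^ q * exp c"
      proof -
        have "1 / r\<^sup>2 = exp (2 * \<rho>)" by (subst r_exp) (simp add: power2_eq_square exp_add[symmetric] exp_minus field_simps)
        then have "(1 / r\<^sup>2) ^ q = exp (real q * (2 * \<rho>))" by (simp add: exp_of_nat_mult)
        then have "(1 / r\<^sup>2) ^ q = exp c" by (simp add: c_def mult_ac)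
        then show ?thesis by (simp add: power_divide divide_simps)
      qed
      have key: "ln \<Gamma> - c * (real m - real q) \<le> c - c * lam / lR"
      proof -
        have a1: "c * real m > c * (lam / lR') - c" using m_gt c0
          by (metis mult_strict_left_mono right_diff_distrib' mult.right_neutral)
        have a2: "c * \<delta> * lam \<ge> ln \<Gamma> + real q * c"
          using lam1 c0 \<delta>0 by (simp add: field_simps)
        have a3: "c * \<delta> * lam = c * (lam / lR') - c * lam / lR" by (simp add: \<delta>_def algebra_simps)
        show ?thesis using a1 a2 a3 by (simp add: algebra_simps)
      qed
      have ee: "exp (ln \<Gamma> - c * (real m - real q)) = \<Gamma> * exp (- (c * (real m - real q)))"
        using \<Gamma>0 by (simp add: exp_diff exp_minus divide_inverse)
      have "\<Gamma> * r ^ (2 * q * (m - q)) = exp (ln \<Gamma> - c * (real m - real q))"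
        by (simp only: e1 ee)
      also have "\<dots> \<le> exp (c - c * lam / lR)" using key by simp
      also have "\<dots> = exp c * exp (- (c * lam / lR))" by (simp add: exp_diff exp_minus field_simps)
      finally have "\<Gamma> * r ^ (2 * q * (m - q)) \<le> exp c * exp (- (c * lam / lR))" .
      then have "M b1 b2 ^ q * (\<Gamma> * r ^ (2 * q * (m - q))) \<le> M b1 b2 ^ q * (exp c * exp (- (c * lam / lR)))"
        using Mp by (intro mult_left_mono) auto
      then show ?thesis unfolding e2 e3 by (simp add: mult_ac)
    qed
    finally show "approx_num N A \<Theta> n (Lop N A g ^^ q) \<le> (M b1 b2 / r\<^sup>2) ^ q * (real n - 1) powr (- 2 * real q * ln (1 / r) / ln R)"
      unfolding x_def .
  qed
qed

end


theorem corollary5p3: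
  fixes N :: nat and A :: "nat \<Rightarrow> nat \<Rightarrow> nat" and D r :: real
  assumes "N \<ge> 1" and "zero_one_matrix N A" and "aperiodic N A"
    and "D > 0" and "0 < r" and "r < 1"
  shows "\<exists>C4 :: real \<Rightarrow> real \<Rightarrow> real.
           (\<forall>b1 b2. b1 > 0 \<longrightarrow> b2 > 0 \<longrightarrow> C4 b1 b2 > 0) \<and>
           (\<forall>(q::nat) (R::real). R > exp (htop N A) \<longrightarrow>
              (\<exists>N1::nat. \<forall>n\<ge>N1. \<forall>b1 b2. b1 > 0 \<longrightarrow> b2 > 0 \<longrightarrow>
                 (\<forall>g\<in>Vsp N A. condH N A (\<lambda>m. D * r ^ m) b1 b2 g \<longrightarrow>
                    approx_num N A (\<lambda>m. D * r ^ m) n (Lop N A g ^^ q)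
                      \<le> (C4 b1 b2 / r\<^sup>2) ^ q
                         * (real n - 1) powr (- 2 * real q * ln (1 / r) / ln R))))"
proof -
  have Sne: "Sig N A \<noteq> {}" using Sig_nonempty assms(1-3) .
  interpret S: setting N A D r using assms Sne by unfold_locales auto
  show ?thesis
  proof (intro exI[of _ "S.M"] conjI allI impI)
    fix b1 b2 :: real assume "b1 > 0" "b2 > 0"
    then show "S.M b1 b2 > 0" using S.M_facts by blast
  next
    fix q :: nat and R :: real assume "R > exp (htop N A)"
    then show "\<exists>N1::nat. \<forall>n\<ge>N1. \<forall>b1 b2. b1 > 0 \<longrightarrow> b2 > 0 \<longrightarrow>
                 (\<forall>g\<in>Vsp N A. condH N A (\<lambda>m. D * r ^ m) b1 b2 g \<longrightarrow>
                    approx_num N A (\<lambda>m. D * r ^ m) n (Lop N A g ^^ q)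
                      \<le> (S.M b1 b2 / r\<^sup>2) ^ q
                         * (real n - 1) powr (- 2 * real q * ln (1 / r) / ln R))"
      by (rule S.final_main)
  qed
qed

end
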